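(* Let Assumptions (A) hold, $\ell>0$, $T>0$, $a\in\mathbb R_+$, and let $S$ be the solution of $\frac{d}{dt}S=A_\ell(S)$ with some $S(0)\in\mathbb R_+$. For $(x_0,\eta)\in\mathcal H^s\times C([0,T];\mathcal H^s)$ let $x=\mathcal J_1(x_0,\eta)$ be the solution of $x(t)=x_0+\int_0^tF(x(v))D_\ell(S(v))\,dv+\eta(t)$, and for $(\mathfrak S_0,w)\in\mathbb R_+\times C([0,T];\mathbb R)$ let $\mathfrak S=\mathcal J_2(\mathfrak S_0,w)$ be the solution of $\mathfrak S(t)=\mathfrak S_0+\int_0^t\tilde A_\ell(\mathfrak S(v))\,dv+a\,w(t)$. Then $\mathcal J_1:\mathcal H^s\times C([0,T];\mathcal H^s)\to C([0,T];\mathcal H^s)$ and $\mathcal J_2:\mathbb R_+\times C([0,T];\mathbb R)\to C([0,T];\mathbb R)$ are continuous (path spaces with the uniform topology).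
   Context: $\mathcal H$, $\mathcal C$, $\phi_j$, $\lambda_j^2$, $\mathcal H^r$ with $\|x\|_r^2=\sum_jj^{2r}\langle x,\phi_j\rangle^2$ as usual, $(\mathcal H^s)^*\cong\mathcal H^{-s}$; $F(z)=-z-\mathcal C\nabla\Psi(z)$. Assumptions (A): (1) $\lambda_j\asymp j^{-\kappa}$, $\kappa>1/2$; (2) $\Psi:\mathcal H^s\to\mathbb R$ defined everywhere, $s\in[0,\kappa-1/2)$; (3) $0\le\Psi(x)\lesssim1+\|x\|_s^2$; (4) $\|\nabla\Psi(x)\|_{-s}\lesssim1+\|x\|_s$, $\|\partial^2\Psi(x)\|_{\mathcal L(\mathcal H^s,\mathcal H^{-s})}\lesssim1$. With $\Phi$ the standard normal cdf: for $x>0$, $D_\ell(x)=2\ell^2e^{\ell^2(x-1)}\Phi(\ell(1-2x)/\sqrt{2x})$, $\Gamma_\ell(x)=D_\ell(x)+2\ell^2\Phi(-\ell/\sqrt{2x})$, $A_\ell(x)=-2xD_\ell(x)+\Gamma_\ell(x)$; at $0$ all equal $2\ell^2e^{-\ell^2}$. $\tilde A_\ell:\mathbb R\to\mathbb R$ is an extension of $A_\ell$ to the negative half-line: $\tilde A_\ell=A_\ell$ on $[0,\infty)$, $\tilde A_\ell=1$ on $(-\infty,-1/2]$, and on $(-1/2,0)$ it smoothly interpolates between these values, being strictly positive for all $x<1$ and satisfying $|\tilde A_\ell(x)-\tilde A_\ell(y)|\lesssim(1+|x|)|x-y|$. *)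

theory Defs
  imports "HOL-Probability.Probability"
begin

text \<open>Coordinates: an element x of the Hilbert space H is represented by its
coefficients (x j) = <x, phi_(j+1)> with respect to the eigenbasis of C
(index shift: Isabelle index j corresponds to paper index j+1).\<close>

type_synonym hvec = "nat \<Rightarrow> real"

definition in_Hs :: "real \<Rightarrow> hvec \<Rightarrow> bool" where
  "in_Hs r x \<longleftrightarrow> summable (\<lambda>j. real (Suc j) powr (2 * r) * (x j)\<^sup>2)"

definition hs_norm :: "real \<Rightarrow> hvec \<Rightarrow> real" where
  "hs_norm r x = sqrt (\<Sum>j. real (Suc j) powr (2 * r) * (x j)\<^sup>2)"

definition pairing :: "hvec \<Rightarrow> hvec \<Rightarrow> real" where
  "pairing g h = (\<Sum>j. g j * h j)"

definition Phi :: "real \<Rightarrow> real" where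
  "Phi x = (LINT t:{..x}|lborel. std_normal_density t)"

definition D_l :: "real \<Rightarrow> real \<Rightarrow> real" where
  "D_l l x = (if x = 0 then 2 * l\<^sup>2 * exp (- l\<^sup>2)
     else 2 * l\<^sup>2 * exp (l\<^sup>2 * (x - 1)) * Phi (l * (1 - 2 * x) / sqrt (2 * x)))"

definition Gamma_l :: "real \<Rightarrow> real \<Rightarrow> real" where
  "Gamma_l l x = (if x = 0 then 2 * l\<^sup>2 * exp (- l\<^sup>2)
     else D_l l x + 2 * l\<^sup>2 * Phi (- l / sqrt (2 * x)))"

definition A_l :: "real \<Rightarrow> real \<Rightarrow> real" where
  "A_l l x = (if x = 0 then 2 * l\<^sup>2 * exp (- l\<^sup>2)
     else - 2 * x * D_l l x + Gamma_l l x)"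

text \<open>The drift F(z) = -z - C grad Psi(z) in coordinates, where C phi_j = lambda_j^2 phi_j.\<close>
definition F_drift :: "(nat \<Rightarrow> real) \<Rightarrow> (hvec \<Rightarrow> hvec) \<Rightarrow> hvec \<Rightarrow> hvec" where
  "F_drift lam gradPsi z = (\<lambda>j. - z j - (lam j)\<^sup>2 * gradPsi z j)"

definition cont_path_Hs :: "real \<Rightarrow> real \<Rightarrow> (real \<Rightarrow> hvec) \<Rightarrow> bool" where
  "cont_path_Hs r T f \<longleftrightarrow> (\<forall>t\<in>{0..T}. in_Hs r (f t)) \<and>
     (\<forall>t\<in>{0..T}. \<forall>e>0. \<exists>d>0. \<forall>u\<in>{0..T}. \<bar>u - t\<bar> < d \<longrightarrow> hs_norm r (f u - f t) < e)"

definition sup_dist_Hs :: "real \<Rightarrow> real \<Rightarrow> (real \<Rightarrow> hvec) \<Rightarrow> (real \<Rightarrow> hvec) \<Rightarrow> real" where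
  "sup_dist_Hs r T f g = (SUP t\<in>{0..T}. hs_norm r (f t - g t))"

definition sup_dist_R :: "real \<Rightarrow> (real \<Rightarrow> real) \<Rightarrow> (real \<Rightarrow> real) \<Rightarrow> real" where
  "sup_dist_R T f g = (SUP t\<in>{0..T}. \<bar>f t - g t\<bar>)"

definition bounded_op_Hs :: "real \<Rightarrow> real \<Rightarrow> (hvec \<Rightarrow> hvec) \<Rightarrow> bool" where
  "bounded_op_Hs r K L \<longleftrightarrow>
     (\<forall>h k a b. in_Hs r h \<longrightarrow> in_Hs r k \<longrightarrow> L (\<lambda>j. a * h j + b * k j) = (\<lambda>j. a * L h j + b * L k j)) \<and>
     (\<forall>h. in_Hs r h \<longrightarrow> in_Hs (-r) (L h) \<and> hs_norm (-r) (L h) \<le> K * hs_norm r h)"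

end

theory Submission
  imports Defs "HOL-Real_Asymp.Real_Asymp"
begin


lemma exp_has_integral:
  fixes L t :: real assumes "L > 0" "t \<ge> 0"
  shows "((\<lambda>v. exp (2*L* v)) has_integral ((exp (2*L*t) - 1) / (2*L))) {0..t}"
proof -
  have "((\<lambda>v. exp (2*L* v)) has_integral ((\<lambda>v. exp (2*L* v)/(2*L)) t - (\<lambda>v. exp (2*L* v)/(2*L)) 0)) {0..t}"
    apply (rule fundamental_theorem_of_calculus)
    using assms apply simp
    using assms apply (auto intro!: derivative_eq_intros simp: has_real_derivative_iff_has_vector_derivative[symmetric])
    done
  then show ?thesis by (simp add: diff_divide_distrib)
qed

lemma ie_contraction_bound:
  fixes g :: "real \<Rightarrow> 'a::banach \<Rightarrow> 'a"
  assumes L: "L > 0" and t: "0 \<le> t"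
    and lip: "\<And>v. v\<in>{0..t} \<Longrightarrow> norm (g v (p v) - g v (q v)) \<le> L * norm (p v - q v)"
    and ip: "(\<lambda>v. g v (p v)) integrable_on {0..t}"
    and iq: "(\<lambda>v. g v (q v)) integrable_on {0..t}"
    and m: "\<And>v. v\<in>{0..t} \<Longrightarrow> norm (p v - q v) \<le> m * exp (2*L* v)"
  shows "norm (integral {0..t} (\<lambda>v. g v (p v)) - integral {0..t} (\<lambda>v. g v (q v))) \<le> m * (exp (2*L*t) - 1) / 2"
proof -
  have hi: "((\<lambda>v. (L*m) * exp (2*L* v)) has_integral (L*m) * ((exp (2*L*t) - 1) / (2*L))) {0..t}"
    by (rule has_integral_mult_right, rule exp_has_integral[OF L t])
  have "norm (integral {0..t} (\<lambda>v. g v (p v)) - integral {0..t} (\<lambda>v. g v (q v)))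
      = norm (integral {0..t} (\<lambda>v. g v (p v) - g v (q v)))"
    using integral_diff[OF ip iq] by simp
  also have "\<dots> \<le> integral {0..t} (\<lambda>v. (L*m) * exp (2*L* v))"
  proof (rule integral_norm_bound_integral)
    show "(\<lambda>v. g v (p v) - g v (q v)) integrable_on {0..t}" using ip iq by (rule integrable_diff)
    show "(\<lambda>v. L * m * exp (2 * L * v)) integrable_on {0..t}" using hi by blast
    fix v assume v: "v \<in> {0..t}"
    have "norm (g v (p v) - g v (q v)) \<le> L * norm (p v - q v)" using lip[OF v] .
    also have "\<dots> \<le> L * (m * exp (2*L* v))" using m[OF v] L by (intro mult_left_mono) auto
    finally show "norm (g v (p v) - g v (q v)) \<le> L * m * exp (2 * L * v)" by simp
  qed
  also have "\<dots> = (L*m) * ((exp (2*L*t) - 1) / (2*L))" using hi by (rule integral_unique)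
  also have "\<dots> = m * (exp (2*L*t) - 1) / 2" using L by (simp add: field_simps)
  finally show ?thesis .
qed

lemma ie_stability:
  fixes g :: "real \<Rightarrow> 'a::banach \<Rightarrow> 'a"
  assumes L: "L > 0"
    and lip: "\<And>v x y. v\<in>{0..T} \<Longrightarrow> norm (g v x - g v y) \<le> L * norm (x - y)"
    and gc: "\<And>u. continuous_on {0..T} u \<Longrightarrow> continuous_on {0..T} (\<lambda>v. g v (u v))"
    and xc: "continuous_on {0..T} x"
    and xe: "\<And>t. t\<in>{0..T} \<Longrightarrow> x t = xz + integral {0..t} (\<lambda>v. g v (x v)) + \<eta> t"
    and yc: "continuous_on {0..T} y"
    and ye: "\<And>t. t\<in>{0..T} \<Longrightarrow> y t = yz + integral {0..t} (\<lambda>v. g v (y v)) + \<xi> t"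
    and d: "\<And>t. t\<in>{0..T} \<Longrightarrow> norm (xz - yz + (\<eta> t - \<xi> t)) \<le> \<delta>"
    and t: "t \<in> {0..T}"
  shows "norm (x t - y t) \<le> 2 * exp (2*L*T) * \<delta>"
proof -
  define h where "h v = exp (- (2*L* v)) * norm (x v - y v)" for v
  have hc: "continuous_on {0..T} h" unfolding h_def
    by (intro continuous_intros xc yc)
  have bdd: "bdd_above (h ` {0..T})"
    by (intro bounded_imp_bdd_above compact_imp_bounded compact_continuous_image hc compact_Icc)
  define m where "m = (SUP v\<in>{0..T}. h v)"
  have hm: "h v \<le> m" if "v \<in> {0..T}" for v unfolding m_def using bdd that by (rule cSUP_upper2) simp
  have T0: "0 \<le> T" using t by simp
  have d0: "0 \<le> \<delta>" using d[of 0] T0 by (meson atLeastAtMost_iff norm_ge_zero order_trans order_refl)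
  have "0 \<le> h 0" by (simp add: h_def)
  then have m0: "0 \<le> m" using hm[of 0] T0 by simp
  have pm: "norm (x v - y v) \<le> m * exp (2*L* v)" if "v \<in> {0..T}" for v
  proof -
    have "norm (x v - y v) = exp (2*L* v) * h v" by (simp add: h_def exp_minus field_simps)
    also have "\<dots> \<le> exp (2*L* v) * m" using hm[OF that] by (intro mult_left_mono) auto
    finally show ?thesis by (simp add: mult.commute)
  qed
  have key: "h s \<le> \<delta> + m / 2" if s: "s \<in> {0..T}" for s
  proof -
    have sub: "{0..s} \<subseteq> {0..T}" using s by auto
    have ix: "(\<lambda>v. g v (x v)) integrable_on {0..s}"
      by (rule integrable_continuous_interval, rule continuous_on_subset[OF gc[OF xc] sub])
    have iy: "(\<lambda>v. g v (y v)) integrable_on {0..s}"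
      by (rule integrable_continuous_interval, rule continuous_on_subset[OF gc[OF yc] sub])
    have I: "norm (integral {0..s} (\<lambda>v. g v (x v)) - integral {0..s} (\<lambda>v. g v (y v))) \<le> m * (exp (2*L* s) - 1) / 2"
      apply (rule ie_contraction_bound[where g=g and p=x and q=y, OF L _ _ ix iy])
      using s sub lip pm by auto
    have "x s - y s = (xz - yz + (\<eta> s - \<xi> s)) + (integral {0..s} (\<lambda>v. g v (x v)) - integral {0..s} (\<lambda>v. g v (y v)))"
      using xe[OF s] ye[OF s] by (simp add: algebra_simps)
    then have "norm (x s - y s) \<le> \<delta> + m * (exp (2*L* s) - 1) / 2"
      using d[OF s] I norm_triangle_ineq[of "xz - yz + (\<eta> s - \<xi> s)" "integral {0..s} (\<lambda>v. g v (x v)) - integral {0..s} (\<lambda>v. g v (y v))"] by simp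
    then have "h s \<le> exp (- (2*L* s)) * (\<delta> + m * (exp (2*L* s) - 1) / 2)"
      unfolding h_def by (intro mult_left_mono) auto
    also have "\<dots> = exp (- (2*L* s)) * \<delta> + m/2 - m/2 * exp (- (2*L* s))"
      by (simp add: field_simps exp_minus)
    also have "\<dots> \<le> \<delta> + m/2"
    proof -
      have "exp (- (2*L* s)) \<le> 1" using s L by simp
      then have "exp (- (2*L* s)) * \<delta> \<le> \<delta>" using d0 by (simp add: mult_left_le_one_le)
      moreover have "0 \<le> m/2 * exp (- (2*L* s))" using m0 by simp
      ultimately show ?thesis by linarith
    qed
    finally show ?thesis .
  qed
  have "(SUP v\<in>{0..T}. h v) \<le> \<delta> + m/2" using key T0 by (intro cSUP_least) auto
  then have "m \<le> \<delta> + m/2" by (simp only: m_def[symmetric])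
  then have m2: "m \<le> 2 * \<delta>" by simp
  have "norm (x t - y t) \<le> m * exp (2*L*t)" using pm[OF t] .
  also have "\<dots> \<le> 2 * \<delta> * exp (2*L*T)" using m2 m0 t L by (intro mult_mono) auto
  finally show ?thesis by (simp add: mult_ac)
qed

lemma clamp_real_in: "(0::real) \<le> T \<Longrightarrow> clamp 0 T t \<in> {0..T}"
  using clamp_in_interval[of 0 T t] by (simp add: cbox_interval)

lemma ie_exists:
  fixes g :: "real \<Rightarrow> 'a::banach \<Rightarrow> 'a"
  assumes L: "L > 0" and T: "0 \<le> T"
    and lip: "\<And>v x y. v\<in>{0..T} \<Longrightarrow> norm (g v x - g v y) \<le> L * norm (x - y)"
    and gc: "\<And>u. continuous_on {0..T} u \<Longrightarrow> continuous_on {0..T} (\<lambda>v. g v (u v))"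
    and ec: "continuous_on {0..T} \<eta>"
  shows "\<exists>x. continuous_on {0..T} x \<and> (\<forall>t\<in>{0..T}. x t = xz + integral {0..t} (\<lambda>v. g v (x v)) + \<eta> t)"
proof -
  define F where "F y t = exp (- (2*L*t)) *\<^sub>R (xz + integral {0..t} (\<lambda>v. g v (exp (2*L* v) *\<^sub>R y v)) + \<eta> t)"
    for y :: "real \<Rightarrow> 'a" and t
  have c1: "continuous_on {0..T} (\<lambda>v. g v (exp (2*L* v) *\<^sub>R y v))" if "continuous_on {0..T} y" for y :: "real \<Rightarrow> 'a"
    by (rule gc) (intro continuous_intros that)
  have Fc: "continuous_on {0..T} (F y)" if "continuous_on {0..T} y" for y
  proof -
    have "continuous_on {0..T} (\<lambda>t. integral {0..t} (\<lambda>v. g v (exp (2*L* v) *\<^sub>R y v)))"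
      by (rule indefinite_integral_continuous_1, rule integrable_continuous_interval, rule c1[OF that])
    then show ?thesis unfolding F_def by (intro continuous_intros ec)
  qed
  have ex: "\<exists>h::real \<Rightarrow>\<^sub>C 'a. (\<forall>t\<in>{0..T}. apply_bcontfun h t = F (apply_bcontfun y) t) \<and>
      (\<forall>t. apply_bcontfun h t = F (apply_bcontfun y) (clamp 0 T t))" for y :: "real \<Rightarrow>\<^sub>C 'a"
  proof -
    have "continuous_on (cbox 0 T) (F (apply_bcontfun y))" using Fc[of "apply_bcontfun y"] by (simp add: cbox_interval)
    then obtain h :: "real \<Rightarrow>\<^sub>C 'a" where "\<And>x. x \<in> cbox 0 T \<Longrightarrow> h x = F y x" "\<And>x. h x = F y (clamp 0 T x)"
      by (rule continuous_on_cbox_bcontfunE) blast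
    then show ?thesis unfolding cbox_interval by blast
  qed
  define \<Phi> where "\<Phi> y = (SOME h::real \<Rightarrow>\<^sub>C 'a. (\<forall>t\<in>{0..T}. apply_bcontfun h t = F (apply_bcontfun y) t) \<and>
      (\<forall>t. apply_bcontfun h t = F (apply_bcontfun y) (clamp 0 T t)))" for y
  have \<Phi>: "(\<forall>t\<in>{0..T}. apply_bcontfun (\<Phi> y) t = F (apply_bcontfun y) t) \<and>
      (\<forall>t. apply_bcontfun (\<Phi> y) t = F (apply_bcontfun y) (clamp 0 T t))" for y
    unfolding \<Phi>_def by (rule someI_ex[OF ex])
  have contr: "dist (\<Phi> y) (\<Phi> z) \<le> (1/2) * dist y z" for y z
  proof (rule dist_bound)
    fix t
    define c where "c = clamp 0 T t"
    have c: "c \<in> {0..T}" unfolding c_def using T by (rule clamp_real_in)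
    have sub: "{0..c} \<subseteq> {0..T}" using c by auto
    define p where "p v = exp (2*L* v) *\<^sub>R apply_bcontfun y v" for v
    define q where "q v = exp (2*L* v) *\<^sub>R apply_bcontfun z v" for v
    have ip: "(\<lambda>v. g v (p v)) integrable_on {0..c}" unfolding p_def
      by (rule integrable_continuous_interval, rule continuous_on_subset[OF c1 sub]) simp
    have iq: "(\<lambda>v. g v (q v)) integrable_on {0..c}" unfolding q_def
      by (rule integrable_continuous_interval, rule continuous_on_subset[OF c1 sub]) simp
    have pq: "norm (p v - q v) \<le> dist y z * exp (2*L* v)" for v
    proof -
      have "norm (p v - q v) = exp (2*L* v) * norm (apply_bcontfun y v - apply_bcontfun z v)"
        unfolding p_def q_def by (simp add: scaleR_diff_right[symmetric])
      also have "\<dots> \<le> exp (2*L* v) * dist y z"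
        using dist_bounded[of y v z] by (intro mult_left_mono) (auto simp: dist_norm)
      finally show ?thesis by (simp add: mult.commute)
    qed
    have I: "norm (integral {0..c} (\<lambda>v. g v (p v)) - integral {0..c} (\<lambda>v. g v (q v))) \<le> dist y z * (exp (2*L*c) - 1) / 2"
      apply (rule ie_contraction_bound[where g=g and p=p and q=q, OF L _ _ ip iq])
      using c sub lip pq by auto
    have "dist (\<Phi> y t) (\<Phi> z t) = norm (F y c - F z c)" using \<Phi> by (simp add: c_def dist_norm)
    also have "F y c - F z c = exp (- (2*L*c)) *\<^sub>R (integral {0..c} (\<lambda>v. g v (p v)) - integral {0..c} (\<lambda>v. g v (q v)))"
      unfolding F_def p_def q_def by (simp add: algebra_simps)
    also have "norm \<dots> = exp (- (2*L*c)) * norm (integral {0..c} (\<lambda>v. g v (p v)) - integral {0..c} (\<lambda>v. g v (q v)))"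
      by simp
    also have "\<dots> \<le> exp (- (2*L*c)) * (dist y z * (exp (2*L*c) - 1) / 2)"
      using I by (intro mult_left_mono) auto
    also have "\<dots> = dist y z / 2 - dist y z / 2 * exp (- (2*L*c))"
      by (simp add: field_simps exp_minus)
    also have "\<dots> \<le> (1/2) * dist y z" by simp
    finally show "dist (\<Phi> y t) (\<Phi> z t) \<le> (1/2) * dist y z" .
  qed
  obtain ys where ys: "\<Phi> ys = ys" using banach_fix_type[of "1/2" \<Phi>] contr by auto
  define x where "x t = exp (2*L*t) *\<^sub>R apply_bcontfun ys t" for t
  have xc: "continuous_on {0..T} x" unfolding x_def by (intro continuous_intros) simp
  have "x t = xz + integral {0..t} (\<lambda>v. g v (x v)) + \<eta> t" if t: "t \<in> {0..T}" for t
  proof -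
    have "apply_bcontfun ys t = F ys t" using \<Phi>[of ys] t ys by metis
    then have "x t = exp (2*L*t) *\<^sub>R F ys t" by (simp add: x_def)
    also have "\<dots> = xz + integral {0..t} (\<lambda>v. g v (x v)) + \<eta> t"
      unfolding F_def x_def by (simp add: exp_minus)
    finally show ?thesis .
  qed
  then show ?thesis using xc by blast
qed



definition "NN = density lborel std_normal_density"

lemma NN_real_dist: "real_distribution NN"
  unfolding real_distribution_def real_distribution_axioms_def NN_def
  apply (intro conjI prob_space_normal_density) apply simp apply (simp only: sets_density) apply (simp add: sets_lborel) done

lemma Phi_cdf: "Phi x = cdf NN x"
proof -
  have "cdf NN x = measure NN {..x}" by (simp add: cdf_def)
  also have "\<dots> = enn2real (\<integral>\<^sup>+ t. ennreal (std_normal_density t) * indicator {..x} t \<partial>lborel)"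
    unfolding NN_def measure_def by (simp add: emeasure_density)
  also have "\<dots> = enn2real (\<integral>\<^sup>+ t. ennreal (indicator {..x} t * std_normal_density t) \<partial>lborel)"
    by (simp add: ennreal_mult'' mult.commute ennreal_indicator)
  also have "\<dots> = (\<integral> t. indicator {..x} t * std_normal_density t \<partial>lborel)"
  proof (subst nn_integral_eq_integral)
    show "integrable lborel (\<lambda>t. indicator {..x} t * std_normal_density t)"
      using integrable_mult_indicator[of "{..x}" lborel std_normal_density] by simp
  qed auto
  also have "\<dots> = Phi x" unfolding Phi_def set_lebesgue_integral_def by simp
  finally show ?thesis by simp
qed

lemma Phi_nonneg: "0 \<le> Phi x"
  unfolding Phi_cdf by (rule finite_borel_measure.cdf_nonneg, rule real_distribution.finite_borel_measure_M, rule NN_real_dist)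

lemma Phi_le1: "Phi x \<le> 1"
  unfolding Phi_cdf by (rule real_distribution.cdf_bounded_prob, rule NN_real_dist)

lemma Phi_lim: "(Phi \<longlongrightarrow> 1) at_top"
  unfolding Phi_cdf[abs_def] by (rule real_distribution.cdf_lim_at_top_prob, rule NN_real_dist)

lemma Phi_cont: "isCont Phi x"
proof -
  have "measure NN {x} = 0"
    unfolding NN_def measure_def by (simp add: emeasure_density nn_integral_null_set)
  then show ?thesis unfolding Phi_cdf[abs_def]
    using finite_borel_measure.isCont_cdf[OF real_distribution.finite_borel_measure_M[OF NN_real_dist]] by simp
qed



lemma sq_summable_add:
  fixes x y :: "nat \<Rightarrow> real"
  assumes "summable (\<lambda>j. (x j)\<^sup>2)" "summable (\<lambda>j. (y j)\<^sup>2)"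
  shows "summable (\<lambda>j. (x j + y j)\<^sup>2)"
proof (rule summable_comparison_test'[where g="\<lambda>j. 2 * (x j)\<^sup>2 + 2 * (y j)\<^sup>2" and N=0])
  show "summable (\<lambda>j. 2 * (x j)\<^sup>2 + 2 * (y j)\<^sup>2)" using assms by (intro summable_add summable_mult)
  fix n show "norm ((x n + y n)\<^sup>2) \<le> 2 * (x n)\<^sup>2 + 2 * (y n)\<^sup>2"
  proof -
    have h: "0 \<le> (x n - y n)^2" by simp
    have "norm ((x n + y n)\<^sup>2) = (x n + y n)\<^sup>2" by simp
    also have "\<dots> \<le> 2 * (x n)\<^sup>2 + 2 * (y n)\<^sup>2" using h by (simp add: power2_eq_square algebra_simps)
    finally show ?thesis .
  qed
qed

lemma sq_summable_mult:
  fixes x y :: "nat \<Rightarrow> real"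
  assumes "summable (\<lambda>j. (x j)\<^sup>2)" "summable (\<lambda>j. (y j)\<^sup>2)"
  shows "summable (\<lambda>j. x j * y j)"
proof (rule summable_comparison_test'[where g="\<lambda>j. (x j)\<^sup>2 + (y j)\<^sup>2" and N=0])
  show "summable (\<lambda>j. (x j)\<^sup>2 + (y j)\<^sup>2)" using assms by (intro summable_add)
  fix n show "norm (x n * y n) \<le> (x n)\<^sup>2 + (y n)\<^sup>2"
  proof -
    have "0 \<le> (\<bar>x n\<bar> - \<bar>y n\<bar>)^2" by simp
    also have "\<dots> = (x n)^2 - 2 * (\<bar>x n\<bar> * \<bar>y n\<bar>) + (y n)^2" by (simp add: power2_diff)
    finally have a: "2 * (\<bar>x n\<bar> * \<bar>y n\<bar>) \<le> (x n)^2 + (y n)^2" by simp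
    have b: "0 \<le> \<bar>x n\<bar> * \<bar>y n\<bar>" by simp
    have "norm (x n * y n) = \<bar>x n\<bar> * \<bar>y n\<bar>" by (simp add: abs_mult)
    then show ?thesis using a b by linarith
  qed
qed

lemma sq_summable_scale:
  fixes x :: "nat \<Rightarrow> real"
  assumes "summable (\<lambda>j. (x j)\<^sup>2)"
  shows "summable (\<lambda>j. (c * x j)\<^sup>2)"
  using summable_mult[OF assms, of "c^2"] by (simp add: power_mult_distrib)

lemma sq_summable_uminus:
  fixes x :: "nat \<Rightarrow> real"
  assumes "summable (\<lambda>j. (x j)\<^sup>2)"
  shows "summable (\<lambda>j. (- x j)\<^sup>2)"
  using assms by simp

typedef l2 = "{x::nat \<Rightarrow> real. summable (\<lambda>j. (x j)\<^sup>2)}" morphisms l2_rep Abs_l2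
  by (rule exI[of _ "\<lambda>_. 0"]) simp

setup_lifting type_definition_l2

lemma l2_sum: "summable (\<lambda>j. (l2_rep u j)\<^sup>2)"
  using l2_rep[of u] by simp

instantiation l2 :: real_vector
begin
lift_definition zero_l2 :: l2 is "\<lambda>_. 0" by simp
lift_definition plus_l2 :: "l2 \<Rightarrow> l2 \<Rightarrow> l2" is "\<lambda>x y j. x j + y j" by (rule sq_summable_add)
lift_definition minus_l2 :: "l2 \<Rightarrow> l2 \<Rightarrow> l2" is "\<lambda>x y j. x j - y j"
  using sq_summable_add[of _ "\<lambda>j. - _ j"] by simp
lift_definition uminus_l2 :: "l2 \<Rightarrow> l2" is "\<lambda>x j. - x j" by simp
lift_definition scaleR_l2 :: "real \<Rightarrow> l2 \<Rightarrow> l2" is "\<lambda>c x j. c * x j" by (rule sq_summable_scale)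
instance
  by standard (transfer; auto simp: algebra_simps)+
end

lemma l2_rep_zero[simp]: "l2_rep 0 j = 0" by transfer simp
lemma l2_rep_plus[simp]: "l2_rep (u + v) j = l2_rep u j + l2_rep v j" by transfer simp
lemma l2_rep_minus[simp]: "l2_rep (u - v) j = l2_rep u j - l2_rep v j" by transfer simp
lemma l2_rep_uminus[simp]: "l2_rep (- u) j = - l2_rep u j" by transfer simp
lemma l2_rep_scaleR[simp]: "l2_rep (c *\<^sub>R u) j = c * l2_rep u j" by transfer simp

instantiation l2 :: real_inner
begin
definition inner_l2 :: "l2 \<Rightarrow> l2 \<Rightarrow> real" where
  "inner_l2 u v = (\<Sum>j. l2_rep u j * l2_rep v j)"
definition norm_l2 :: "l2 \<Rightarrow> real" where
  "norm_l2 u = sqrt (\<Sum>j. (l2_rep u j)\<^sup>2)"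
definition sgn_l2 :: "l2 \<Rightarrow> l2" where
  "sgn_l2 u = u /\<^sub>R norm u"
definition dist_l2 :: "l2 \<Rightarrow> l2 \<Rightarrow> real" where
  "dist_l2 u v = norm (u - v)"
definition uniformity_l2 :: "(l2 \<times> l2) filter" where
  "uniformity_l2 = (INF e\<in>{0 <..}. principal {(x, y). dist x y < e})"
definition open_l2 :: "l2 set \<Rightarrow> bool" where
  "open_l2 U = (\<forall>x\<in>U. \<forall>\<^sub>F (x', y) in uniformity. x' = x \<longrightarrow> y \<in> U)"
lemma summ_prod: "summable (\<lambda>j. l2_rep u j * l2_rep v j)"
  by (rule sq_summable_mult[OF l2_sum l2_sum])
instance
proof
  fix x y z :: l2 and r :: real
  show "inner x y = inner y x" unfolding inner_l2_def by (simp add: mult.commute)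
  show "inner (x + y) z = inner x z + inner y z" unfolding inner_l2_def
    by (simp add: distrib_right suminf_add[OF summ_prod summ_prod])
  show "inner (r *\<^sub>R x) y = r * inner x y" unfolding inner_l2_def
    using suminf_mult[OF summ_prod, of r x y] by (simp add: mult.assoc)
  show "0 \<le> inner x x" unfolding inner_l2_def by (intro suminf_nonneg summ_prod) simp
  show "inner x x = 0 \<longleftrightarrow> x = 0"
  proof -
    have "inner x x = 0 \<longleftrightarrow> (\<forall>j. l2_rep x j * l2_rep x j = 0)"
      unfolding inner_l2_def by (rule suminf_eq_zero_iff[OF summ_prod]) simp
    also have "\<dots> \<longleftrightarrow> x = 0" by (auto simp: l2_rep_inject[symmetric] fun_eq_iff)
    finally show ?thesis .
  qed
  show "norm x = sqrt (inner x x)" unfolding norm_l2_def inner_l2_def by (simp add: power2_eq_square)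
qed (simp_all add: sgn_l2_def dist_l2_def uniformity_l2_def open_l2_def)
end

lemma norm_l2_sq: "(norm u)\<^sup>2 = (\<Sum>j. (l2_rep u j)\<^sup>2)"
  unfolding norm_l2_def by (simp add: suminf_nonneg l2_sum)

lemma l2_partial_le: "(\<Sum>j<K. (l2_rep u j)\<^sup>2) \<le> (norm u)\<^sup>2"
  unfolding norm_l2_sq by (rule sum_le_suminf[OF l2_sum]) auto

lemma l2_coord_le: "\<bar>l2_rep u j\<bar> \<le> norm u"
proof -
  have "(l2_rep u j)\<^sup>2 \<le> (norm u)\<^sup>2"
    using l2_partial_le[of u "Suc j"] sum_le_suminf[OF l2_sum, of "{j}" u] unfolding norm_l2_sq by simp
  then show ?thesis using abs_le_square_iff[of "l2_rep u j" "norm u"] by simp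
qed

lemma bounded_linear_coord: "bounded_linear (\<lambda>u. l2_rep u j)"
  by (rule bounded_linear_intro[where K=1]) (auto simp: l2_coord_le)

instance l2 :: complete_space
proof
  fix X :: "nat \<Rightarrow> l2" assume X: "Cauchy X"
  have cj: "convergent (\<lambda>n. l2_rep (X n) j)" for j
  proof -
    have "Cauchy (\<lambda>n. l2_rep (X n) j)"
    proof (rule metric_CauchyI)
      fix e :: real assume "0 < e"
      then obtain M where M: "\<And>m n. m \<ge> M \<Longrightarrow> n \<ge> M \<Longrightarrow> dist (X m) (X n) < e" using metric_CauchyD[OF X] by blast
      show "\<exists>M. \<forall>m\<ge>M. \<forall>n\<ge>M. dist (l2_rep (X m) j) (l2_rep (X n) j) < e"
      proof (intro exI allI impI)
        fix m n assume "m \<ge> M" "n \<ge> M"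
        then have "norm (X m - X n) < e" using M by (simp add: dist_norm)
        then show "dist (l2_rep (X m) j) (l2_rep (X n) j) < e"
          using l2_coord_le[of "X m - X n" j] by (simp add: dist_real_def)
      qed
    qed
    then show ?thesis by (simp add: Cauchy_convergent_iff)
  qed
  define x where "x j = lim (\<lambda>n. l2_rep (X n) j)" for j
  have xl: "(\<lambda>n. l2_rep (X n) j) \<longlonglongrightarrow> x j" for j unfolding x_def using cj[of j] by (simp add: convergent_LIMSEQ_iff)
  have est: "summable (\<lambda>j. (l2_rep (X n) j - x j)\<^sup>2) \<and> (\<Sum>j. (l2_rep (X n) j - x j)\<^sup>2) \<le> e\<^sup>2"
    if e: "e > 0" and n: "\<And>m. m \<ge> n \<Longrightarrow> dist (X n) (X m) < e" for n e
  proof -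
    have ps: "(\<Sum>j<K. (l2_rep (X n) j - x j)\<^sup>2) \<le> e\<^sup>2" for K
    proof (rule LIMSEQ_le_const2)
      show "(\<lambda>m. \<Sum>j<K. (l2_rep (X n) j - l2_rep (X (m + n)) j)\<^sup>2) \<longlonglongrightarrow> (\<Sum>j<K. (l2_rep (X n) j - x j)\<^sup>2)"
        by (intro tendsto_intros LIMSEQ_ignore_initial_segment xl)
      show "\<exists>N. \<forall>m\<ge>N. (\<Sum>j<K. (l2_rep (X n) j - l2_rep (X (m + n)) j)\<^sup>2) \<le> e\<^sup>2"
      proof (intro exI allI impI)
        fix m
        have "(\<Sum>j<K. (l2_rep (X n) j - l2_rep (X (m + n)) j)\<^sup>2) \<le> (norm (X n - X (m+n)))\<^sup>2"
          using l2_partial_le[of "X n - X (m+n)" K] by simp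
        also have "\<dots> \<le> e\<^sup>2" using n[of "m+n"] e by (intro power_mono) (auto simp: dist_norm)
        finally show "(\<Sum>j<K. (l2_rep (X n) j - l2_rep (X (m + n)) j)\<^sup>2) \<le> e\<^sup>2" .
      qed
    qed
    have sm: "summable (\<lambda>j. (l2_rep (X n) j - x j)\<^sup>2)"
    proof (rule bounded_imp_summable[where B="e\<^sup>2"])
      fix K show "(\<Sum>j\<le>K. (l2_rep (X n) j - x j)\<^sup>2) \<le> e\<^sup>2" using ps[of "Suc K"] by (simp add: lessThan_Suc_atMost)
    qed simp
    show ?thesis using sm by (auto intro: suminf_le_const ps)
  qed
  obtain N where N: "\<And>m n. m \<ge> N \<Longrightarrow> n \<ge> N \<Longrightarrow> dist (X m) (X n) < 1" using metric_CauchyD[OF X, of 1] by auto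
  have "summable (\<lambda>j. (l2_rep (X N) j - x j)\<^sup>2)" using est[of 1 N] N by auto
  then have xs: "summable (\<lambda>j. (x j)\<^sup>2)"
    using sq_summable_add[OF l2_sum[of "X N"] sq_summable_uminus, of "\<lambda>j. l2_rep (X N) j - x j"] by simp
  define xx where "xx = Abs_l2 x"
  have rx: "l2_rep xx = x" unfolding xx_def using xs by (simp add: Abs_l2_inverse)
  have "X \<longlonglongrightarrow> xx"
  proof (rule metric_LIMSEQ_I)
    fix r :: real assume r: "r > 0"
    obtain M where M: "\<And>m n. m \<ge> M \<Longrightarrow> n \<ge> M \<Longrightarrow> dist (X m) (X n) < r/2" using metric_CauchyD[OF X, of "r/2"] r by auto
    show "\<exists>no. \<forall>n\<ge>no. dist (X n) xx < r"
    proof (intro exI allI impI)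
      fix n assume n: "n \<ge> M"
      have "(\<Sum>j. (l2_rep (X n) j - x j)\<^sup>2) \<le> (r/2)\<^sup>2" using est[of "r/2" n] M n r by auto
      then have "(norm (X n - xx))\<^sup>2 \<le> (r/2)\<^sup>2" unfolding norm_l2_sq by (simp add: rx)
      then have "norm (X n - xx) \<le> r/2" using r by (simp add: power2_le_iff_abs_le)
      then show "dist (X n) xx < r" using r by (simp add: dist_norm)
    qed
  qed
  then show "convergent X" by (auto simp: convergent_def)
qed

instance l2 :: banach ..



definition wt :: "real \<Rightarrow> nat \<Rightarrow> real" where "wt r j = real (Suc j) powr r"

lemma wt_pos[simp]: "0 < wt r j" by (simp add: wt_def)
lemma wt_sq: "(wt r j)\<^sup>2 = real (Suc j) powr (2 * r)"
  unfolding wt_def by (simp add: power2_eq_square powr_add[symmetric])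
lemma wt_inv: "wt (-r) j * wt r j = 1"
  unfolding wt_def by (simp add: powr_add[symmetric])

lemma in_Hs_iff: "in_Hs r x \<longleftrightarrow> summable (\<lambda>j. (wt r j * x j)\<^sup>2)"
  unfolding in_Hs_def by (simp add: power_mult_distrib wt_sq)

definition U :: "real \<Rightarrow> hvec \<Rightarrow> l2" where "U r x = Abs_l2 (\<lambda>j. wt r j * x j)"
definition Ui :: "real \<Rightarrow> l2 \<Rightarrow> hvec" where "Ui r u = (\<lambda>j. wt (-r) j * l2_rep u j)"

lemma U_rep: "in_Hs r x \<Longrightarrow> l2_rep (U r x) j = wt r j * x j"
  unfolding U_def by (subst Abs_l2_inverse) (auto simp: in_Hs_iff)

lemma hs_norm_U: "in_Hs r x \<Longrightarrow> hs_norm r x = norm (U r x)"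
  unfolding hs_norm_def norm_l2_def by (simp add: U_rep power_mult_distrib wt_sq)

lemma Ui_rep: "wt r j * Ui r u j = l2_rep u j"
  unfolding Ui_def by (simp add: mult.assoc[symmetric] mult.commute[of "wt r j"] wt_inv)

lemma in_Hs_Ui: "in_Hs r (Ui r u)"
  unfolding in_Hs_iff using l2_sum[of u] by (simp only: Ui_rep)

lemma U_Ui[simp]: "U r (Ui r u) = u"
  by (rule l2_rep_inject[THEN iffD1]) (simp add: fun_eq_iff U_rep in_Hs_Ui Ui_rep)

lemma Ui_U: "in_Hs r x \<Longrightarrow> Ui r (U r x) = x"
  unfolding Ui_def by (simp add: fun_eq_iff U_rep mult.assoc[symmetric] wt_inv)

lemma in_Hs_lin: "in_Hs r x \<Longrightarrow> in_Hs r y \<Longrightarrow> in_Hs r (\<lambda>j. a * x j + b * y j)"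
  unfolding in_Hs_iff
  using sq_summable_add[OF sq_summable_scale[of "\<lambda>j. wt r j * x j" a] sq_summable_scale[of "\<lambda>j. wt r j * y j" b]]
  by (simp add: algebra_simps)

lemma in_Hs_diff: "in_Hs r x \<Longrightarrow> in_Hs r y \<Longrightarrow> in_Hs r (x - y)"
  using in_Hs_lin[of r x y 1 "-1"] by (simp add: fun_diff_def)


lemma U_lin: "in_Hs r x \<Longrightarrow> in_Hs r y \<Longrightarrow> U r (\<lambda>j. a * x j + b * y j) = a *\<^sub>R U r x + b *\<^sub>R U r y"
  by (rule l2_rep_inject[THEN iffD1]) (simp add: fun_eq_iff U_rep in_Hs_lin algebra_simps)

lemma U_diff: "in_Hs r x \<Longrightarrow> in_Hs r y \<Longrightarrow> U r (x - y) = U r x - U r y"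
  by (rule l2_rep_inject[THEN iffD1]) (simp add: fun_eq_iff U_rep in_Hs_diff algebra_simps)


lemma hs_norm_diff: "in_Hs r x \<Longrightarrow> in_Hs r y \<Longrightarrow> hs_norm r (x - y) = norm (U r x - U r y)"
  by (simp add: hs_norm_U in_Hs_diff U_diff)



lemma in_Hs_scale: "in_Hs r x \<Longrightarrow> in_Hs r (\<lambda>j. c * x j)"
  using in_Hs_lin[of r x x c 0] by simp

lemma U_scale: "in_Hs r x \<Longrightarrow> U r (\<lambda>j. c * x j) = c *\<^sub>R U r x"
  using U_lin[of r x x c 0] by simp

lemma hs_norm_scale: "in_Hs r x \<Longrightarrow> hs_norm r (\<lambda>j. c * x j) = \<bar>c\<bar> * hs_norm r x"
  by (simp add: hs_norm_U in_Hs_scale U_scale)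

lemma hs_norm_diff3: "in_Hs r a \<Longrightarrow> in_Hs r b \<Longrightarrow> in_Hs r c \<Longrightarrow> hs_norm r (a - b - c) = norm (U r a - U r b - U r c)"
  by (simp add: hs_norm_diff in_Hs_diff U_diff)

lemma grad_lip:
  fixes gradPsi :: "hvec \<Rightarrow> hvec" and hessPsi :: "hvec \<Rightarrow> hvec \<Rightarrow> hvec"
  assumes gH: "\<And>x. in_Hs s x \<Longrightarrow> in_Hs (-s) (gradPsi x)"
    and hd: "\<forall>x. in_Hs s x \<longrightarrow>
          (\<forall>e>0. \<exists>d>0. \<forall>h. in_Hs s h \<and> hs_norm s h < d \<longrightarrow>
             hs_norm (-s) (gradPsi (\<lambda>j. x j + h j) - gradPsi x - hessPsi x h) \<le> e * hs_norm s h)"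
    and hb: "\<forall>x. in_Hs s x \<longrightarrow> bounded_op_Hs s K (hessPsi x)"
    and x: "in_Hs s x" and y: "in_Hs s y"
  shows "norm (U (-s) (gradPsi y) - U (-s) (gradPsi x)) \<le> max K 0 * hs_norm s (y - x)"
proof -
  define d where "d = y - x"
  have dH: "in_Hs s d" unfolding d_def using y x by (rule in_Hs_diff)
  define N where "N = hs_norm s d"
  have N0: "0 \<le> N" unfolding N_def using dH by (simp add: hs_norm_U)
  define z where "z t = (\<lambda>j. x j + t * d j)" for t
  have zH: "in_Hs s (z t)" for t unfolding z_def using in_Hs_lin[OF x dH, of 1 t] by simp
  define \<phi> where "\<phi> t = U (-s) (gradPsi (z t))" for t
  define \<phi>' where "\<phi>' t = U (-s) (hessPsi (z t) d)" for t
  have hlin: "hessPsi (z t) (\<lambda>j. c * d j) = (\<lambda>j. c * hessPsi (z t) d j)" for t c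
  proof -
    have "bounded_op_Hs s K (hessPsi (z t))" using hb zH by blast
    then have "\<forall>h k a b. in_Hs s h \<longrightarrow> in_Hs s k \<longrightarrow> hessPsi (z t) (\<lambda>j. a * h j + b * k j) = (\<lambda>j. a * hessPsi (z t) h j + b * hessPsi (z t) k j)"
      unfolding bounded_op_Hs_def by (elim conjE)
    then have "hessPsi (z t) (\<lambda>j. c * d j + 0 * d j) = (\<lambda>j. c * hessPsi (z t) d j + 0 * hessPsi (z t) d j)"
      using dH by blast
    then show ?thesis by simp
  qed
  have hH: "in_Hs (-s) (hessPsi (z t) d)" and hN: "hs_norm (-s) (hessPsi (z t) d) \<le> K * N" for t
    using hb zH dH unfolding bounded_op_Hs_def N_def by blast+
  have der: "(\<phi> has_derivative (\<lambda>\<tau>. \<tau> *\<^sub>R \<phi>' t)) (at t within UNIV)" for t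
    unfolding has_derivative_at_alt
  proof (intro conjI allI impI)
    show "bounded_linear (\<lambda>\<tau>. \<tau> *\<^sub>R \<phi>' t)" by (rule bounded_linear_scaleR_left)
    fix e :: real assume e: "e > 0"
    define e' where "e' = e / (N + 1)"
    have e': "e' > 0" unfolding e'_def using e N0 by simp
    obtain \<delta> where \<delta>: "\<delta> > 0" and H: "\<And>h. in_Hs s h \<Longrightarrow> hs_norm s h < \<delta> \<Longrightarrow>
        hs_norm (-s) (gradPsi (\<lambda>j. z t j + h j) - gradPsi (z t) - hessPsi (z t) h) \<le> e' * hs_norm s h"
      using hd zH[of t] e' by blast
    show "\<exists>d>0. \<forall>y. norm (y - t) < d \<longrightarrow> norm (\<phi> y - \<phi> t - ((y - t) *\<^sub>R \<phi>' t)) \<le> e * norm (y - t)"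
    proof (intro exI[of _ "\<delta> / (N + 1)"] conjI allI impI)
      show "0 < \<delta> / (N + 1)" using \<delta> N0 by simp
      fix t1 assume t1: "norm (t1 - t) < \<delta> / (N + 1)"
      define h where "h = (\<lambda>j. (t1 - t) * d j)"
      have hHs: "in_Hs s h" unfolding h_def using dH by (rule in_Hs_scale)
      have hn: "hs_norm s h = \<bar>t1 - t\<bar> * N" unfolding h_def N_def using dH by (rule hs_norm_scale)
      have "\<bar>t1 - t\<bar> * N \<le> \<bar>t1 - t\<bar> * (N + 1)" by (simp add: mult_left_mono)
      also have "\<dots> < \<delta>" using t1 N0 by (simp add: field_simps)
      finally have hsmall: "hs_norm s h < \<delta>" using hn by simp
      have zz: "(\<lambda>j. z t j + h j) = z t1" unfolding z_def h_def by (simp add: fun_eq_iff algebra_simps)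
      have hh: "hessPsi (z t) h = (\<lambda>j. (t1 - t) * hessPsi (z t) d j)" unfolding h_def by (rule hlin)
      have "norm (\<phi> t1 - \<phi> t - ((t1 - t) *\<^sub>R \<phi>' t))
          = hs_norm (-s) (gradPsi (z t1) - gradPsi (z t) - (\<lambda>j. (t1 - t) * hessPsi (z t) d j))"
        unfolding \<phi>_def \<phi>'_def
        by (subst hs_norm_diff3) (auto simp: gH zH in_Hs_scale hH U_scale)
      also have "\<dots> \<le> e' * hs_norm s h" using H[OF hHs hsmall] by (simp add: zz hh)
      also have "\<dots> = e' * \<bar>t1 - t\<bar> * N" by (simp add: hn)
      also have "\<dots> \<le> e * norm (t1 - t)"
      proof -
        have "e' * N \<le> e" unfolding e'_def using e N0 by (simp add: field_simps)
        then have "(e' * N) * \<bar>t1 - t\<bar> \<le> e * \<bar>t1 - t\<bar>" by (rule mult_right_mono) simp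
        then show ?thesis by (simp add: mult_ac)
      qed
      finally show "norm (\<phi> t1 - \<phi> t - ((t1 - t) *\<^sub>R \<phi>' t)) \<le> e * norm (t1 - t)" .
    qed
  qed
  have ob: "onorm (\<lambda>\<tau>. \<tau> *\<^sub>R \<phi>' t) \<le> max K 0 * N" for t
  proof (rule onorm_bound)
    show "0 \<le> max K 0 * N" using N0 by simp
    fix \<tau> :: real
    have "norm (\<phi>' t) = hs_norm (-s) (hessPsi (z t) d)" unfolding \<phi>'_def by (simp add: hs_norm_U hH)
    also have "\<dots> \<le> max K 0 * N" using hN[of t] mult_right_mono[OF max.cobounded1[of K 0] N0] by linarith
    finally show "norm (\<tau> *\<^sub>R \<phi>' t) \<le> max K 0 * N * norm \<tau>" by (simp add: mult_left_mono mult.commute)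
  qed
  have "norm (\<phi> 1 - \<phi> 0) \<le> max K 0 * N * norm (1 - 0 :: real)"
    by (rule differentiable_bound[OF convex_UNIV der ob]) auto
  moreover have "z 1 = y" "z 0 = x" unfolding z_def d_def by (auto simp: fun_eq_iff)
  ultimately show ?thesis unfolding \<phi>_def N_def d_def by simp
qed



lemma arg_lim:
  fixes l :: real assumes "l > 0"
  shows "filterlim (\<lambda>x. l * (1 - 2 * x) / sqrt (2 * x)) at_top (at_right 0)"
  using assms by real_asymp

lemma D_l_nonneg: "0 \<le> D_l l x"
  unfolding D_l_def by (auto intro!: mult_nonneg_nonneg Phi_nonneg)

lemma D_l_cont:
  fixes l :: real assumes l: "l > 0"
  shows "continuous_on {0..} (D_l l)"
proof -
  define f where "f x = 2 * l\<^sup>2 * exp (l\<^sup>2 * (x - 1)) * Phi (l * (1 - 2 * x) / sqrt (2 * x))" for x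
  have eqf: "D_l l x = f x" if "x \<noteq> 0" for x using that unfolding D_l_def f_def by simp
  have c: "continuous (at x within {0..}) (D_l l)" if x: "x \<in> {0..}" for x
  proof (cases "x = 0")
    case False
    then have xp: "x > 0" using x by simp
    have "isCont f x" unfolding f_def using xp
      by (intro continuous_intros isCont_o2[OF _ Phi_cont]) auto
    moreover have "\<forall>\<^sub>F y in nhds x. D_l l y = f y"
      using eventually_nhds_in_open[of "{0<..}" x] xp by (auto elim!: eventually_mono intro: eqf)
    ultimately have "isCont (D_l l) x" using isCont_cong[of "D_l l" f x] by (simp add: eqf xp)
    then show ?thesis by (rule continuous_within_subset) simp
  next
    case True
    have "(f \<longlongrightarrow> 2 * l\<^sup>2 * exp (l\<^sup>2 * (0 - 1)) * 1) (at_right 0)"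
      unfolding f_def
      by (intro tendsto_intros filterlim_compose[OF Phi_lim arg_lim[OF l]])
    moreover have "\<forall>\<^sub>F x in at_right 0. D_l l x = f x" by (simp add: eventually_at_filter eqf)
    moreover have "D_l l 0 = 2 * l\<^sup>2 * exp (l\<^sup>2 * (0 - 1)) * 1" by (simp add: D_l_def)
    ultimately have "(D_l l \<longlongrightarrow> D_l l 0) (at_right 0)" using tendsto_cong by metis
    then show ?thesis using True by (simp add: continuous_within at_within_Ici_at_right)
  qed
  then show ?thesis by (simp add: continuous_on_eq_continuous_within)
qed

lemma A_l_le:
  assumes "x \<ge> 1/2"
  shows "A_l l x \<le> 2 * l\<^sup>2"
proof -
  have x0: "x \<noteq> 0" using assms by auto
  have "A_l l x = (1 - 2 * x) * D_l l x + 2 * l\<^sup>2 * Phi (- l / sqrt (2 * x))"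
    unfolding A_l_def Gamma_l_def using x0 by (simp add: algebra_simps)
  also have "(1 - 2 * x) * D_l l x \<le> 0" using assms D_l_nonneg[of l x] by (simp add: mult_nonpos_nonneg)
  also have "2 * l\<^sup>2 * Phi (- l / sqrt (2 * x)) \<le> 2 * l\<^sup>2" using Phi_le1 by (simp add: mult_left_le)
  finally show ?thesis by simp
qed



definition clampR :: "real \<Rightarrow> real \<Rightarrow> real" where "clampR R x = max (- R) (min R x)"

lemma clampR_lip: "\<bar>clampR R x - clampR R y\<bar> \<le> \<bar>x - y\<bar>"
  unfolding clampR_def by (auto simp: max_def min_def abs_if)

lemma clampR_abs: "0 \<le> R \<Longrightarrow> \<bar>clampR R x\<bar> \<le> R"
  unfolding clampR_def by (simp add: abs_le_iff max_def min_def)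

lemma clampR_id: "\<bar>x\<bar> \<le> R \<Longrightarrow> clampR R x = x"
  unfolding clampR_def by (simp add: abs_le_iff max_def min_def)

lemma clampR_lt1: "1 \<le> R \<Longrightarrow> x < 1 \<Longrightarrow> clampR R x < 1"
  unfolding clampR_def by (simp add: max_def min_def)

lemma trunc_lip:
  fixes tA :: "real \<Rightarrow> real"
  assumes lip: "\<forall>x y. \<bar>tA x - tA y\<bar> \<le> K * (1 + \<bar>x\<bar>) * \<bar>x - y\<bar>" and R: "0 \<le> R"
  shows "\<bar>tA (clampR R x) - tA (clampR R y)\<bar> \<le> (max K 0 * (1 + R) + 1) * \<bar>x - y\<bar>"
proof -
  have "\<bar>tA (clampR R x) - tA (clampR R y)\<bar> \<le> K * (1 + \<bar>clampR R x\<bar>) * \<bar>clampR R x - clampR R y\<bar>"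
    using lip by blast
  also have "\<dots> \<le> max K 0 * (1 + \<bar>clampR R x\<bar>) * \<bar>clampR R x - clampR R y\<bar>"
    by (intro mult_right_mono) auto
  also have "\<dots> \<le> (max K 0 * (1 + R)) * \<bar>x - y\<bar>"
    using clampR_abs[OF R, of x] clampR_lip[of R x y]
    by (intro mult_mono) (auto intro!: mult_left_mono)
  also have "\<dots> \<le> (max K 0 * (1 + R) + 1) * \<bar>x - y\<bar>" by (simp add: distrib_right)
  finally show ?thesis .
qed

lemma trunc_cont:
  fixes tA :: "real \<Rightarrow> real"
  assumes lip: "\<forall>x y. \<bar>tA x - tA y\<bar> \<le> K * (1 + \<bar>x\<bar>) * \<bar>x - y\<bar>" and R: "0 \<le> R"
  shows "continuous_on UNIV (\<lambda>x. tA (clampR R x))"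
proof -
  have "(max K 0 * (1 + R) + 1)-lipschitz_on UNIV (\<lambda>x. tA (clampR R x))"
    using trunc_lip[OF lip R] R by (intro lipschitz_onI) (auto simp: dist_real_def)
  then show ?thesis by (rule lipschitz_on_continuous_on)
qed

lemma tA_upper:
  fixes tA :: "real \<Rightarrow> real"
  assumes lip: "\<forall>x y. \<bar>tA x - tA y\<bar> \<le> K * (1 + \<bar>x\<bar>) * \<bar>x - y\<bar>"
    and ext: "\<forall>x\<ge>0. tA x = A_l l x" and one: "\<forall>x\<le>-1/2. tA x = 1"
  shows "tA x \<le> max 1 (max (tA 0 + max K 0 * 2) (2 * l\<^sup>2))"
proof -
  consider "x \<le> -1/2" | "-1/2 < x" "x < 1/2" | "1/2 \<le> x" by linarith
  then show ?thesis
  proof cases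
    case 1 then show ?thesis using one by simp
  next
    case 2
    have "\<bar>tA x - tA 0\<bar> \<le> K * (1 + \<bar>x\<bar>) * \<bar>x\<bar>" using lip by (metis diff_zero)
    also have "\<dots> \<le> max K 0 * (1 + \<bar>x\<bar>) * \<bar>x\<bar>" by (intro mult_right_mono) auto
    also have "\<dots> \<le> max K 0 * 2 * 1" using 2 by (intro mult_mono) (auto intro!: mult_left_mono)
    finally show ?thesis by simp
  next
    case 3 then show ?thesis using ext A_l_le[of x l] by simp
  qed
qed

lemma apriori:
  fixes tA :: "real \<Rightarrow> real"
  assumes M: "\<And>x. tA x \<le> M" and pos: "\<And>x. x < 1 \<Longrightarrow> tA x > 0"
    and R: "1 \<le> R" and a: "0 \<le> a" and S0: "0 \<le> S0" and T: "0 \<le> T"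
    and fc: "continuous_on UNIV (\<lambda>x. tA (clampR R x))"
    and yc: "continuous_on {0..T} y" and wc: "continuous_on {0..T} w"
    and W: "\<And>t. t \<in> {0..T} \<Longrightarrow> \<bar>w t\<bar> \<le> W"
    and eq: "\<And>t. t \<in> {0..T} \<Longrightarrow> y t = S0 + integral {0..t} (\<lambda>v. tA (clampR R (y v))) + a * w t"
    and t: "t \<in> {0..T}"
  shows "- 2 * a * W \<le> y t \<and> y t \<le> S0 + \<bar>M\<bar> * T + a * W"
proof -
  define f where "f v = tA (clampR R (y v))" for v
  have fcont: "continuous_on {0..T} f" unfolding f_def
    using continuous_on_compose2[OF fc yc] by simp
  have fint: "f integrable_on {0..s}" if "s \<in> {0..T}" for s
    by (rule integrable_continuous_interval, rule continuous_on_subset[OF fcont]) (use that in auto)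
  define z where "z s = y s - a * w s" for s
  have zeq: "z s = S0 + integral {0..s} f" if "s \<in> {0..T}" for s
    using eq[OF that] by (simp add: z_def f_def[abs_def])
  have zc: "continuous_on {0..T} z" unfolding z_def by (intro continuous_intros yc wc)
  have W0: "0 \<le> W" using W[of 0] T by (meson abs_ge_zero atLeastAtMost_iff order.trans order_refl)
  have aw: "a * w s \<le> a * W" "- (a * W) \<le> a * w s" if "s \<in> {0..T}" for s
  proof -
    have "a * \<bar>w s\<bar> \<le> a * W" using W[OF that] a by (rule mult_left_mono)
    moreover have "\<bar>a * w s\<bar> = a * \<bar>w s\<bar>" using a by (simp add: abs_mult)
    ultimately show "a * w s \<le> a * W" "- (a * W) \<le> a * w s" by linarith+
  qed
  define c0 where "c0 = min S0 (1/2 - a * W)"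
  have low: "c0 \<le> z t"
  proof (rule ccontr)
    assume zt: "\<not> c0 \<le> z t"
    define P where "P = {0..t} \<inter> z -` {c0..}"
    have sub: "{0..t} \<subseteq> {0..T}" using t by auto
    have clP: "closed P" unfolding P_def
      by (rule continuous_closed_preimage[OF continuous_on_subset[OF zc sub]]) auto
    have z0: "z 0 = S0" using zeq[of 0] T by simp
    have "0 \<in> P" unfolding P_def using t z0 by (auto simp: c0_def)
    then have neP: "P \<noteq> {}" by auto
    have bdP: "bdd_above P" unfolding P_def by (auto intro: bdd_aboveI[of _ t])
    define t0 where "t0 = Sup P"
    have t0P: "t0 \<in> P" unfolding t0_def using closed_contains_Sup[OF neP bdP clP] .
    then have t0: "0 \<le> t0" "t0 \<le> t" "c0 \<le> z t0" unfolding P_def by auto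
    have after: "z v < c0" if "v \<in> {t0<..t}" for v
    proof (rule ccontr)
      assume "\<not> z v < c0"
      then have "v \<in> P" unfolding P_def using that t0 by auto
      then have "v \<le> t0" unfolding t0_def using bdP by (rule cSup_upper)
      then show False using that by simp
    qed
    have fpos: "0 \<le> f v" if "v \<in> {t0..t} - {t0}" for v
    proof -
      have v: "v \<in> {t0<..t}" "v \<in> {0..T}" using that t0 t by auto
      have "y v = z v + a * w v" by (simp add: z_def)
      also have "\<dots> < c0 + a * W" using after[OF v(1)] aw(1)[OF v(2)] by linarith
      also have "\<dots> \<le> 1/2" unfolding c0_def using min.cobounded2[of S0 "1/2 - a * W"] by linarith
      finally have "y v < 1" by simp
      then show ?thesis unfolding f_def using pos[OF clampR_lt1[OF R]] by (simp add: less_imp_le)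
    qed
    define f' where "f' v = (if v = t0 then 0 else f v)" for v
    have ft: "f integrable_on {t0..t}"
      by (rule integrable_on_subinterval[OF fint[of t]]) (use t t0 in auto)
    have "integral {t0..t} f = integral {t0..t} f'"
      by (rule integral_spike[of "{t0}"]) (auto simp: f'_def)
    also have "0 \<le> integral {t0..t} f'"
      by (rule integral_nonneg, rule integrable_spike[OF ft, of "{t0}"]) (auto simp: f'_def fpos)
    finally have I0: "0 \<le> integral {t0..t} f" .
    have "integral {0..t0} f + integral {t0..t} f = integral {0..t} f"
      using Henstock_Kurzweil_Integration.integral_combine[where a=0 and c=t0 and b=t and f=f] t0 fint[OF t] by simp
    then have "z t = z t0 + integral {t0..t} f" using zeq[OF t] zeq[of t0] t0 t by auto
    then have "c0 \<le> z t" using I0 t0 by linarith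
    then show False using zt by simp
  qed
  have up: "integral {0..t} f \<le> \<bar>M\<bar> * T"
  proof -
    have "integral {0..t} f \<le> integral {0..t} (\<lambda>_. M)"
      by (rule integral_le[OF fint[OF t]]) (auto simp: f_def M)
    also have "\<dots> = t * M" using t by simp
    also have "\<dots> \<le> t * \<bar>M\<bar>" by (rule mult_left_mono) (use t in auto)
    also have "\<dots> \<le> T * \<bar>M\<bar>" by (rule mult_right_mono) (use t in auto)
    also have "\<dots> = \<bar>M\<bar> * T" by simp
    finally show ?thesis .
  qed
  have yz: "y t = z t + a * w t" by (simp add: z_def)
  have aW: "0 \<le> a * W" using a W0 by simp
  have "- (2 * a * W) \<le> c0 - a * W" unfolding c0_def using S0 aW by linarith
  then have l: "- 2 * a * W \<le> y t" using yz low aw(2)[OF t] by linarith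
  have "y t \<le> S0 + \<bar>M\<bar> * T + a * W" using yz zeq[OF t] up aw(1)[OF t] by linarith
  with l show ?thesis by simp
qed



lemma sup_dist_R_ge:
  assumes "continuous_on {0..T} f" "continuous_on {0..T} g" "t \<in> {0..T}"
  shows "\<bar>f t - g t\<bar> \<le> sup_dist_R T f g"
proof -
  have "continuous_on {0..T} (\<lambda>t. \<bar>f t - g t\<bar>)" by (intro continuous_intros assms)
  then have "bdd_above ((\<lambda>t. \<bar>f t - g t\<bar>) ` {0..T})"
    by (intro bounded_imp_bdd_above compact_imp_bounded compact_continuous_image compact_Icc)
  then show ?thesis unfolding sup_dist_R_def using assms(3) by (rule cSUP_upper2) simp
qed

lemma sup_dist_R_le:
  assumes "0 \<le> T" "\<And>t. t \<in> {0..T} \<Longrightarrow> \<bar>f t - g t\<bar> \<le> B"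
  shows "sup_dist_R T f g \<le> B"
  unfolding sup_dist_R_def using assms by (intro cSUP_least) auto

lemma J2_main:
  fixes tA :: "real \<Rightarrow> real" and T a l :: real
  assumes T: "T > 0" and a: "a \<ge> 0"
    and tA_ext: "\<forall>x\<ge>0. tA x = A_l l x"
    and tA_one: "\<forall>x\<le>-1/2. tA x = 1"
    and tA_pos: "\<forall>x<1. tA x > 0"
    and tA_lip: "\<exists>K. \<forall>x y. \<bar>tA x - tA y\<bar> \<le> K * (1 + \<bar>x\<bar>) * \<bar>x - y\<bar>"
  shows "\<exists>J2 :: real \<Rightarrow> (real \<Rightarrow> real) \<Rightarrow> (real \<Rightarrow> real).
        (\<forall>S0 w. S0 \<ge> 0 \<and> continuous_on {0..T} w \<longrightarrow>
           continuous_on {0..T} (J2 S0 w) \<and>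
           (\<forall>t\<in>{0..T}. J2 S0 w t = S0 + integral {0..t} (\<lambda>v. tA (J2 S0 w v)) + a * w t) \<and>
           (\<forall>y. continuous_on {0..T} y \<and>
              (\<forall>t\<in>{0..T}. y t = S0 + integral {0..t} (\<lambda>v. tA (y v)) + a * w t)
              \<longrightarrow> (\<forall>t\<in>{0..T}. y t = J2 S0 w t))) \<and>
        (\<forall>S0 w. S0 \<ge> 0 \<and> continuous_on {0..T} w \<longrightarrow>
           (\<forall>e>0. \<exists>d>0. \<forall>R0 u. R0 \<ge> 0 \<and> continuous_on {0..T} u \<and>
              \<bar>R0 - S0\<bar> + sup_dist_R T u w < d \<longrightarrow>
              sup_dist_R T (J2 R0 u) (J2 S0 w) < e))"
proof -
  obtain K where lip: "\<forall>x y. \<bar>tA x - tA y\<bar> \<le> K * (1 + \<bar>x\<bar>) * \<bar>x - y\<bar>" using tA_lip by blast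
  define M where "M = max 1 (max (tA 0 + max K 0 * 2) (2 * l\<^sup>2))"
  have Mb: "\<And>x. tA x \<le> M" unfolding M_def by (rule tA_upper[OF lip tA_ext tA_one])
  have pos: "\<And>x. x < 1 \<Longrightarrow> tA x > 0" using tA_pos by blast
  define Rg where "Rg S0 W = S0 + \<bar>M\<bar> * T + 2 * a * W + 1" for S0 W
  have Rg1: "1 \<le> Rg S0 W" if "0 \<le> S0" "0 \<le> W" for S0 W
  proof -
    have "0 \<le> \<bar>M\<bar> * T" "0 \<le> a * W" using T a that by auto
    then show ?thesis unfolding Rg_def using that by linarith
  qed
  define LR where "LR R = max K 0 * (1 + R) + 1" for R
  define g where "g R v x = tA (clampR R x)" for R v x :: real
  have LRpos: "0 < LR R" if "0 \<le> R" for R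
  proof -
    have "0 \<le> max K 0 * (1 + R)" using that by simp
    then show ?thesis unfolding LR_def by linarith
  qed
  have glip: "norm (g R v x - g R v y) \<le> LR R * norm (x - y)" if "0 \<le> R" for R v x y
    unfolding g_def LR_def using trunc_lip[OF lip that] by simp
  have gcont: "continuous_on UNIV (\<lambda>x. tA (clampR R x))" if "0 \<le> R" for R
    using trunc_cont[OF lip that] .
  have gc: "continuous_on {0..T} (\<lambda>v. g R v (u v))" if "0 \<le> R" "continuous_on {0..T} u" for R u
    unfolding g_def using continuous_on_compose2[OF gcont[OF that(1)] that(2)] by simp
  define sol where "sol S0 w y \<longleftrightarrow> continuous_on {0..T} y \<and>
      (\<forall>t\<in>{0..T}. y t = S0 + integral {0..t} (\<lambda>v. tA (y v)) + a * w t)" for S0 w y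
  define tsol where "tsol R S0 w y \<longleftrightarrow> continuous_on {0..T} y \<and>
      (\<forall>t\<in>{0..T}. y t = S0 + integral {0..t} (\<lambda>v. g R v (y v)) + a * w t)" for R S0 w y
  have intsame: "integral {0..t} (\<lambda>v. tA (y v)) = integral {0..t} (\<lambda>v. g R v (y v))"
    if "\<forall>t\<in>{0..T}. \<bar>y t\<bar> \<le> R" "t \<in> {0..T}" for y R t
    by (rule Henstock_Kurzweil_Integration.integral_cong) (use that in \<open>auto simp: g_def clampR_id\<close>)
  have sol_tsol: "sol S0 w y \<longleftrightarrow> tsol R S0 w y" if "\<forall>t\<in>{0..T}. \<bar>y t\<bar> \<le> R" for S0 w y R
    unfolding sol_def tsol_def using intsame[OF that] by auto
  have bnd: "\<forall>t\<in>{0..T}. \<bar>y t\<bar> \<le> Rg S0 W - 1"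
    if S0: "0 \<le> S0" and wc: "continuous_on {0..T} w" and W: "\<And>t. t \<in> {0..T} \<Longrightarrow> \<bar>w t\<bar> \<le> W"
      and R: "1 \<le> R" and ts: "tsol R S0 w y" for S0 w W R y
  proof
    fix t assume t: "t \<in> {0..T}"
    have W0: "0 \<le> W" using W[of 0] T by (meson abs_ge_zero atLeastAtMost_iff less_imp_le order.trans order_refl)
    have "- 2 * a * W \<le> y t \<and> y t \<le> S0 + \<bar>M\<bar> * T + a * W"
      apply (rule apriori[where tA=tA and M=M and R=R and a=a and T=T and y=y and w=w and W=W and t=t])
      using Mb pos R a S0 T gcont[of R] wc W ts t unfolding tsol_def g_def by auto
    moreover have "0 \<le> a * W" using a W0 by simp
    moreover have "0 \<le> \<bar>M\<bar> * T" using T by simp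
    ultimately show "\<bar>y t\<bar> \<le> Rg S0 W - 1" unfolding Rg_def using S0 by (simp add: abs_le_iff)
  qed
  have sol_bnd: "\<forall>t\<in>{0..T}. \<bar>y t\<bar> \<le> Rg S0 W - 1"
    if S0: "0 \<le> S0" and wc: "continuous_on {0..T} w" and W: "\<And>t. t \<in> {0..T} \<Longrightarrow> \<bar>w t\<bar> \<le> W"
      and s: "sol S0 w y" for S0 w W y
  proof -
    have "bounded (y ` {0..T})" using s unfolding sol_def
      by (intro compact_imp_bounded compact_continuous_image compact_Icc) auto
    then obtain B where B: "\<And>t. t \<in> {0..T} \<Longrightarrow> \<bar>y t\<bar> \<le> B" unfolding bounded_iff by fastforce
    have "\<forall>t\<in>{0..T}. \<bar>y t\<bar> \<le> max 1 B" using B by (auto intro: le_max_iff_disj[THEN iffD2])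
    then have "tsol (max 1 B) S0 w y" using s sol_tsol by blast
    then show ?thesis using bnd[OF S0 wc W, of "max 1 B" y] by simp
  qed
  define Wof where "Wof w = sup_dist_R T w (\<lambda>_. 0)" for w :: "real \<Rightarrow> real"
  have Wof: "\<bar>w t\<bar> \<le> Wof w" if "continuous_on {0..T} w" "t \<in> {0..T}" for w t
    using sup_dist_R_ge[OF that(1) continuous_on_const[of _ 0] that(2)] unfolding Wof_def by simp
  have Wof0: "0 \<le> Wof w" if "continuous_on {0..T} w" for w
    using Wof[OF that, of 0] T by (meson abs_ge_zero atLeastAtMost_iff less_imp_le order.trans order_refl)
  have ex: "\<exists>y. sol S0 w y" if S0: "0 \<le> S0" and wc: "continuous_on {0..T} w" for S0 w
  proof -
    define R where "R = Rg S0 (Wof w)"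
    have R1: "1 \<le> R" unfolding R_def using Rg1 S0 Wof0[OF wc] by simp
    have R0: "0 \<le> R" using R1 by simp
    have ec: "continuous_on {0..T} (\<lambda>t. a * w t)" using wc by (intro continuous_intros)
    have "\<exists>y. continuous_on {0..T} y \<and> (\<forall>t\<in>{0..T}. y t = S0 + integral {0..t} (\<lambda>v. g R v (y v)) + a * w t)"
      by (rule ie_exists[where g="g R" and L="LR R" and T=T and \<eta>="\<lambda>t. a * w t" and xz=S0, OF LRpos[OF R0] _ glip[OF R0] gc[OF R0] ec])
        (use T in auto)
    then obtain y where yc: "continuous_on {0..T} y"
      and ye: "\<forall>t\<in>{0..T}. y t = S0 + integral {0..t} (\<lambda>v. g R v (y v)) + a * w t" by blast
    then have ts: "tsol R S0 w y" unfolding tsol_def by simp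
    have "\<forall>t\<in>{0..T}. \<bar>y t\<bar> \<le> R - 1" unfolding R_def using bnd[OF S0 wc Wof[OF wc] R1 ts] .
    then have "\<forall>t\<in>{0..T}. \<bar>y t\<bar> \<le> R" by auto
    then have "sol S0 w y" using ts sol_tsol by blast
    then show ?thesis by blast
  qed
  define J2 where "J2 S0 w = (SOME y. sol S0 w y)" for S0 w
  have J2sol: "sol S0 w (J2 S0 w)" if "0 \<le> S0" "continuous_on {0..T} w" for S0 w
    unfolding J2_def using ex[OF that] by (rule someI_ex)
  have stab: "\<bar>ya t - yb t\<bar> \<le> 2 * exp (2 * LR R * T) * \<delta>"
    if "0 \<le> R" "tsol R Sa wa ya" "tsol R Sb wb yb"
      "\<And>t. t \<in> {0..T} \<Longrightarrow> \<bar>Sa - Sb + (a * wa t - a * wb t)\<bar> \<le> \<delta>" "t \<in> {0..T}"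
    for R Sa Sb wa wb ya yb \<delta> t
    using ie_stability[where g="g R" and L="LR R" and T=T and x=ya and y=yb and xz=Sa and yz=Sb
        and \<eta>="\<lambda>t. a * wa t" and \<xi>="\<lambda>t. a * wb t" and \<delta>=\<delta> and t=t]
      that LRpos glip gc unfolding tsol_def by auto
  have uniq: "y t = J2 S0 w t"
    if S0: "0 \<le> S0" and wc: "continuous_on {0..T} w" and s: "sol S0 w y" and t: "t \<in> {0..T}" for S0 w y t
  proof -
    define R where "R = Rg S0 (Wof w)"
    have R1: "1 \<le> R" unfolding R_def using Rg1 S0 Wof0[OF wc] by simp
    have b1: "\<forall>t\<in>{0..T}. \<bar>y t\<bar> \<le> R" using sol_bnd[OF S0 wc Wof[OF wc] s] unfolding R_def by auto
    have b2: "\<forall>t\<in>{0..T}. \<bar>J2 S0 w t\<bar> \<le> R" using sol_bnd[OF S0 wc Wof[OF wc] J2sol[OF S0 wc]] unfolding R_def by auto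
    have "\<bar>y t - J2 S0 w t\<bar> \<le> 2 * exp (2 * LR R * T) * 0"
      by (rule stab[where Sa=S0 and Sb=S0 and wa=w and wb=w])
        (use R1 s J2sol[OF S0 wc] sol_tsol[OF b1] sol_tsol[OF b2] t in auto)
    then show ?thesis by simp
  qed
  have cont: "\<exists>d>0. \<forall>R0 u. R0 \<ge> 0 \<and> continuous_on {0..T} u \<and>
              \<bar>R0 - S0\<bar> + sup_dist_R T u w < d \<longrightarrow>
              sup_dist_R T (J2 R0 u) (J2 S0 w) < e"
    if S0: "0 \<le> S0" and wc: "continuous_on {0..T} w" and e: "e > 0" for S0 w e
  proof -
    define R where "R = Rg (S0 + 1) (Wof w + 1)"
    have R1: "1 \<le> R" unfolding R_def using Rg1 S0 Wof0[OF wc] by simp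
    define C where "C = 2 * exp (2 * LR R * T) * max 1 a"
    have C: "C > 0" unfolding C_def by simp
    define d where "d = min 1 (e / C)"
    have d: "d > 0" unfolding d_def using e C by simp
    show ?thesis
    proof (intro exI[of _ d] conjI d allI impI)
      fix R0 u assume H: "R0 \<ge> 0 \<and> continuous_on {0..T} u \<and> \<bar>R0 - S0\<bar> + sup_dist_R T u w < d"
      then have R0: "0 \<le> R0" and uc: "continuous_on {0..T} u" and small: "\<bar>R0 - S0\<bar> + sup_dist_R T u w < d" by auto
      define dd where "dd = \<bar>R0 - S0\<bar> + sup_dist_R T u w"
      have uw: "\<bar>u t - w t\<bar> \<le> sup_dist_R T u w" if "t \<in> {0..T}" for t using sup_dist_R_ge[OF uc wc that] .
      have sd0: "0 \<le> sup_dist_R T u w" using uw[of 0] T by (meson abs_ge_zero atLeastAtMost_iff less_imp_le order.trans order_refl)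
      have d1: "dd < 1" using small unfolding dd_def d_def by simp
      have ub: "\<bar>u t\<bar> \<le> Wof w + 1" if "t \<in> {0..T}" for t
        using uw[OF that] Wof[OF wc that] d1 unfolding dd_def by (smt (verit) abs_triangle_ineq2 abs_ge_zero)
      have wb: "\<bar>w t\<bar> \<le> Wof w + 1" if "t \<in> {0..T}" for t using Wof[OF wc that] by simp
      have R0b: "R0 \<le> S0 + 1" using d1 sd0 unfolding dd_def by linarith
      have Rmono: "Rg R0 (Wof w + 1) - 1 \<le> R" unfolding Rg_def R_def using R0b by simp
      have b1: "\<forall>t\<in>{0..T}. \<bar>J2 R0 u t\<bar> \<le> R"
        using sol_bnd[OF R0 uc ub J2sol[OF R0 uc]] Rmono by fastforce
      have b2: "\<forall>t\<in>{0..T}. \<bar>J2 S0 w t\<bar> \<le> R"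
        using sol_bnd[OF S0 wc wb J2sol[OF S0 wc]] unfolding R_def Rg_def by fastforce
      have dlt: "\<bar>R0 - S0 + (a * u t - a * w t)\<bar> \<le> max 1 a * dd" if t: "t \<in> {0..T}" for t
      proof -
        have "\<bar>R0 - S0 + (a * u t - a * w t)\<bar> \<le> \<bar>R0 - S0\<bar> + a * \<bar>u t - w t\<bar>"
          using a by (simp add: right_diff_distrib[symmetric] abs_mult abs_triangle_ineq order_trans[OF abs_triangle_ineq])
        also have "\<dots> \<le> \<bar>R0 - S0\<bar> + a * sup_dist_R T u w" using uw[OF t] a by (simp add: mult_left_mono)
        also have "\<dots> \<le> max 1 a * \<bar>R0 - S0\<bar> + max 1 a * sup_dist_R T u w"
          using mult_right_mono[of 1 "max 1 a" "\<bar>R0 - S0\<bar>"] mult_right_mono[of a "max 1 a" "sup_dist_R T u w"] sd0 by simp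
        finally show ?thesis unfolding dd_def by (simp add: distrib_left)
      qed
      have "sup_dist_R T (J2 R0 u) (J2 S0 w) \<le> C * dd"
      proof (rule sup_dist_R_le)
        show "0 \<le> T" using T by simp
        fix t assume t: "t \<in> {0..T}"
        have "\<bar>J2 R0 u t - J2 S0 w t\<bar> \<le> 2 * exp (2 * LR R * T) * (max 1 a * dd)"
          by (rule stab[where Sa=R0 and Sb=S0 and wa=u and wb=w])
            (use R1 J2sol[OF R0 uc] J2sol[OF S0 wc] sol_tsol[OF b1] sol_tsol[OF b2] t dlt in auto)
        then show "\<bar>J2 R0 u t - J2 S0 w t\<bar> \<le> C * dd" unfolding C_def by (simp add: mult_ac)
      qed
      also have "C * dd < C * d" using small C unfolding dd_def by simp
      also have "C * d \<le> e" unfolding d_def using C by (simp add: field_simps min_def)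
      finally show "sup_dist_R T (J2 R0 u) (J2 S0 w) < e" .
    qed
  qed
  show ?thesis
    apply (rule exI[of _ J2])
    using J2sol uniq cont unfolding sol_def by blast
qed



lemma coef_bound:
  fixes lam :: "nat \<Rightarrow> real"
  assumes l0: "0 \<le> lam j" and lu: "lam j \<le> cc * real (Suc j) powr (- kappa)" and s: "s \<le> kappa"
  shows "wt s j * (lam j)\<^sup>2 \<le> cc\<^sup>2 * wt (-s) j"
proof -
  have "(lam j)\<^sup>2 \<le> (cc * real (Suc j) powr (- kappa))\<^sup>2" using lu l0 by (rule power_mono)
  also have "\<dots> = cc\<^sup>2 * real (Suc j) powr (- 2 * kappa)"
    by (simp add: power_mult_distrib power2_eq_square powr_add[symmetric])
  finally have "wt s j * (lam j)\<^sup>2 \<le> wt s j * (cc\<^sup>2 * real (Suc j) powr (- 2 * kappa))"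
    by (intro mult_left_mono) (auto simp: less_imp_le)
  also have "\<dots> = cc\<^sup>2 * real (Suc j) powr (s - 2 * kappa)"
    unfolding wt_def by (simp add: powr_add[symmetric])
  also have "\<dots> \<le> cc\<^sup>2 * real (Suc j) powr (- s)"
    using s by (intro mult_left_mono powr_mono) auto
  finally show ?thesis by (simp add: wt_def)
qed

lemma l2_norm_le:
  assumes c: "0 \<le> c" and h: "\<And>j. \<bar>l2_rep a j\<bar> \<le> c * \<bar>l2_rep b j\<bar>"
  shows "norm a \<le> c * norm b"
proof -
  have "(norm a)\<^sup>2 = (\<Sum>j. (l2_rep a j)\<^sup>2)" by (rule norm_l2_sq)
  also have "\<dots> \<le> (\<Sum>j. c\<^sup>2 * (l2_rep b j)\<^sup>2)"
  proof (rule suminf_le)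
    fix j
    have "\<bar>l2_rep a j\<bar>\<^sup>2 \<le> (c * \<bar>l2_rep b j\<bar>)\<^sup>2" using h[of j] abs_ge_zero by (rule power_mono)
    then show "(l2_rep a j)\<^sup>2 \<le> c\<^sup>2 * (l2_rep b j)\<^sup>2" by (simp add: power_mult_distrib)
  qed (rule l2_sum, rule summable_mult[OF l2_sum])
  also have "\<dots> = c\<^sup>2 * (\<Sum>j. (l2_rep b j)\<^sup>2)" by (rule suminf_mult[OF l2_sum])
  also have "\<dots> = (c * norm b)\<^sup>2" by (simp only: norm_l2_sq[symmetric] power_mult_distrib)
  finally have "(norm a)\<^sup>2 \<le> (c * norm b)\<^sup>2" .
  then show ?thesis by (rule power2_le_imp_le) (use c in simp)
qed

definition Cg :: "(nat \<Rightarrow> real) \<Rightarrow> real \<Rightarrow> (hvec \<Rightarrow> hvec) \<Rightarrow> l2 \<Rightarrow> l2" where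
  "Cg lam s gradPsi u = Abs_l2 (\<lambda>j. wt s j * (lam j)\<^sup>2 * gradPsi (Ui s u) j)"

definition Gd :: "(nat \<Rightarrow> real) \<Rightarrow> real \<Rightarrow> (hvec \<Rightarrow> hvec) \<Rightarrow> l2 \<Rightarrow> l2" where
  "Gd lam s gradPsi u = - u - Cg lam s gradPsi u"

locale drift =
  fixes lam :: "nat \<Rightarrow> real" and s :: real and gradPsi :: "hvec \<Rightarrow> hvec" and c Kg :: real
  assumes gH: "\<And>x. in_Hs s x \<Longrightarrow> in_Hs (-s) (gradPsi x)"
    and cb: "\<And>j. 0 \<le> wt s j * (lam j)\<^sup>2 \<and> wt s j * (lam j)\<^sup>2 \<le> c * wt (-s) j"
    and c0: "0 \<le> c" and Kg0: "0 \<le> Kg"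
    and glip: "\<And>x y. in_Hs s x \<Longrightarrow> in_Hs s y \<Longrightarrow>
        norm (U (-s) (gradPsi y) - U (-s) (gradPsi x)) \<le> Kg * hs_norm s (y - x)"
begin

lemma coord_bound: "\<bar>wt s j * (lam j)\<^sup>2 * z\<bar> \<le> c * \<bar>wt (-s) j * z\<bar>"
proof -
  have "\<bar>wt s j * (lam j)\<^sup>2 * z\<bar> = (wt s j * (lam j)\<^sup>2) * \<bar>z\<bar>" using cb[of j] by (simp add: abs_mult less_imp_le)
  also have "\<dots> \<le> (c * wt (-s) j) * \<bar>z\<bar>" using cb[of j] by (intro mult_right_mono) auto
  also have "\<dots> = c * \<bar>wt (-s) j * z\<bar>" by (simp add: abs_mult less_imp_le)
  finally show ?thesis .
qed

lemma Cg_rep: "l2_rep (Cg lam s gradPsi u) j = wt s j * (lam j)\<^sup>2 * gradPsi (Ui s u) j"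
proof -
  have g: "in_Hs (-s) (gradPsi (Ui s u))" by (rule gH[OF in_Hs_Ui])
  have "summable (\<lambda>j. (wt s j * (lam j)\<^sup>2 * gradPsi (Ui s u) j)\<^sup>2)"
  proof (rule summable_comparison_test'[where N=0])
    show "summable (\<lambda>j. c\<^sup>2 * (wt (-s) j * gradPsi (Ui s u) j)\<^sup>2)"
      using g unfolding in_Hs_iff by (intro summable_mult)
    fix j
    have "\<bar>wt s j * (lam j)\<^sup>2 * gradPsi (Ui s u) j\<bar>\<^sup>2 \<le> (c * \<bar>wt (-s) j * gradPsi (Ui s u) j\<bar>)\<^sup>2"
      by (intro power_mono coord_bound) auto
    then show "norm ((wt s j * (lam j)\<^sup>2 * gradPsi (Ui s u) j)\<^sup>2) \<le> c\<^sup>2 * (wt (-s) j * gradPsi (Ui s u) j)\<^sup>2"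
      by (simp add: power_mult_distrib)
  qed
  then show ?thesis unfolding Cg_def by (simp add: Abs_l2_inverse)
qed

lemma Gd_rep: "l2_rep (Gd lam s gradPsi u) j = wt s j * F_drift lam gradPsi (Ui s u) j"
proof -
  have e: "l2_rep u j = wt s j * Ui s u j" by (rule Ui_rep[symmetric])
  show ?thesis unfolding Gd_def F_drift_def by (simp add: Cg_rep e algebra_simps)
qed

lemma Cg_lip: "norm (Cg lam s gradPsi u - Cg lam s gradPsi u') \<le> c * Kg * norm (u - u')"
proof -
  have "norm (Cg lam s gradPsi u - Cg lam s gradPsi u') \<le> c * norm (U (-s) (gradPsi (Ui s u)) - U (-s) (gradPsi (Ui s u')))"
  proof (rule l2_norm_le[OF c0])
    fix j
    show "\<bar>l2_rep (Cg lam s gradPsi u - Cg lam s gradPsi u') j\<bar>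
        \<le> c * \<bar>l2_rep (U (-s) (gradPsi (Ui s u)) - U (-s) (gradPsi (Ui s u'))) j\<bar>"
      using coord_bound[of j "gradPsi (Ui s u) j - gradPsi (Ui s u') j"]
      by (simp add: Cg_rep U_rep gH in_Hs_Ui right_diff_distrib)
  qed
  also have "\<dots> \<le> c * (Kg * hs_norm s (Ui s u - Ui s u'))"
    using glip[of "Ui s u'" "Ui s u", OF in_Hs_Ui in_Hs_Ui] c0 by (intro mult_left_mono) auto
  also have "hs_norm s (Ui s u - Ui s u') = norm (u - u')"
    by (simp add: hs_norm_diff in_Hs_Ui)
  finally show ?thesis by (simp add: mult.assoc)
qed

lemma Gd_lip: "norm (Gd lam s gradPsi u - Gd lam s gradPsi u') \<le> (1 + c * Kg) * norm (u - u')"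
proof -
  have "Gd lam s gradPsi u - Gd lam s gradPsi u' = - (u - u') - (Cg lam s gradPsi u - Cg lam s gradPsi u')"
    unfolding Gd_def by (simp add: algebra_simps)
  also have "norm \<dots> \<le> norm (u - u') + norm (Cg lam s gradPsi u - Cg lam s gradPsi u')"
    by (metis norm_minus_cancel norm_triangle_ineq4)
  also have "\<dots> \<le> norm (u - u') + c * Kg * norm (u - u')" using Cg_lip by simp
  finally show ?thesis by (simp add: distrib_right)
qed

lemma Gd_cont: "continuous_on UNIV (Gd lam s gradPsi)"
proof -
  have "(1 + c * Kg)-lipschitz_on UNIV (Gd lam s gradPsi)"
    using Gd_lip c0 Kg0 by (intro lipschitz_onI) (auto simp: dist_norm)
  then show ?thesis by (rule lipschitz_on_continuous_on)
qed

end



lemma cpath_iff: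
  "cont_path_Hs r T f \<longleftrightarrow> (\<forall>t\<in>{0..T}. in_Hs r (f t)) \<and> continuous_on {0..T} (\<lambda>t. U r (f t))"
proof -
  have "(\<forall>t\<in>{0..T}. \<forall>e>0. \<exists>d>0. \<forall>u\<in>{0..T}. \<bar>u - t\<bar> < d \<longrightarrow> hs_norm r (f u - f t) < e)
      \<longleftrightarrow> continuous_on {0..T} (\<lambda>t. U r (f t))" if H: "\<forall>t\<in>{0..T}. in_Hs r (f t)"
  proof -
    have "hs_norm r (f u - f t) = dist (U r (f u)) (U r (f t))" if "u \<in> {0..T}" "t \<in> {0..T}" for u t
      using H that by (simp add: hs_norm_diff dist_norm)
    then show ?thesis unfolding continuous_on_iff dist_real_def by (auto 0 0)
  qed
  then show ?thesis unfolding cont_path_Hs_def by blast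
qed

lemma sup_dist_Hs_ge:
  assumes f: "cont_path_Hs r T f" and g: "cont_path_Hs r T g" and t: "t \<in> {0..T}"
  shows "hs_norm r (f t - g t) \<le> sup_dist_Hs r T f g"
proof -
  have fH: "\<forall>t\<in>{0..T}. in_Hs r (f t)" and fc: "continuous_on {0..T} (\<lambda>t. U r (f t))"
    and gH: "\<forall>t\<in>{0..T}. in_Hs r (g t)" and gc: "continuous_on {0..T} (\<lambda>t. U r (g t))"
    using f g unfolding cpath_iff by auto
  have eq: "hs_norm r (f t - g t) = norm (U r (f t) - U r (g t))" if "t \<in> {0..T}" for t
    using fH gH that by (simp add: hs_norm_diff)
  have "continuous_on {0..T} (\<lambda>t. norm (U r (f t) - U r (g t)))" by (intro continuous_intros fc gc)
  then have "bdd_above ((\<lambda>t. norm (U r (f t) - U r (g t))) ` {0..T})"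
    by (intro bounded_imp_bdd_above compact_imp_bounded compact_continuous_image compact_Icc)
  then have "bdd_above ((\<lambda>t. hs_norm r (f t - g t)) ` {0..T})"
    using eq by (metis (no_types, lifting) image_cong)
  then show ?thesis unfolding sup_dist_Hs_def using t by (rule cSUP_upper2) simp
qed

lemma sup_dist_Hs_le:
  assumes "0 \<le> T" "\<And>t. t \<in> {0..T} \<Longrightarrow> hs_norm r (f t - g t) \<le> B"
  shows "sup_dist_Hs r T f g \<le> B"
  unfolding sup_dist_Hs_def using assms by (intro cSUP_least) auto

lemma J1_main:
  fixes lam :: "nat \<Rightarrow> real" and kappa s :: real
    and gradPsi :: "hvec \<Rightarrow> hvec" and hessPsi :: "hvec \<Rightarrow> hvec \<Rightarrow> hvec"
    and l T :: real and S :: "real \<Rightarrow> real" and Psi :: "hvec \<Rightarrow> real"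
  assumes lam: "\<exists>c1 c2. 0 < c1 \<and> 0 < c2 \<and> (\<forall>j. c1 * real (Suc j) powr (- kappa) \<le> lam j \<and>
                 lam j \<le> c2 * real (Suc j) powr (- kappa))"
    and s: "0 \<le> s" "s < kappa - 1/2"
    and grad_is_deriv: "\<forall>x. in_Hs s x \<longrightarrow> in_Hs (-s) (gradPsi x) \<and>
          (\<forall>e>0. \<exists>d>0. \<forall>h. in_Hs s h \<and> hs_norm s h < d \<longrightarrow>
             \<bar>Psi (\<lambda>j. x j + h j) - Psi x - pairing (gradPsi x) h\<bar> \<le> e * hs_norm s h)"
    and hess_is_deriv: "\<forall>x. in_Hs s x \<longrightarrow>
          (\<forall>e>0. \<exists>d>0. \<forall>h. in_Hs s h \<and> hs_norm s h < d \<longrightarrow>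
             hs_norm (-s) (gradPsi (\<lambda>j. x j + h j) - gradPsi x - hessPsi x h) \<le> e * hs_norm s h)"
    and hess_bound: "\<exists>K. \<forall>x. in_Hs s x \<longrightarrow> bounded_op_Hs s K (hessPsi x)"
    and l: "l > 0" and T: "T > 0"
    and S_nonneg: "\<forall>t\<in>{0..T}. S t \<ge> 0"
    and S_ode: "\<forall>t\<in>{0..T}. (S has_real_derivative A_l l (S t)) (at t within {0..T})"
  shows "\<exists>J1 :: hvec \<Rightarrow> (real \<Rightarrow> hvec) \<Rightarrow> (real \<Rightarrow> hvec).
        (\<forall>x0 eta. in_Hs s x0 \<and> cont_path_Hs s T eta \<longrightarrow>
           cont_path_Hs s T (J1 x0 eta) \<and>
           (\<forall>t\<in>{0..T}. \<forall>j. J1 x0 eta t j = x0 j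
               + integral {0..t} (\<lambda>v. F_drift lam gradPsi (J1 x0 eta v) j * D_l l (S v)) + eta t j) \<and>
           (\<forall>y. cont_path_Hs s T y \<and>
              (\<forall>t\<in>{0..T}. \<forall>j. y t j = x0 j
                 + integral {0..t} (\<lambda>v. F_drift lam gradPsi (y v) j * D_l l (S v)) + eta t j)
              \<longrightarrow> (\<forall>t\<in>{0..T}. y t = J1 x0 eta t))) \<and>
        (\<forall>x0 eta. in_Hs s x0 \<and> cont_path_Hs s T eta \<longrightarrow>
           (\<forall>e>0. \<exists>d>0. \<forall>y0 xi. in_Hs s y0 \<and> cont_path_Hs s T xi \<and>
              hs_norm s (y0 - x0) + sup_dist_Hs s T xi eta < d \<longrightarrow>
              sup_dist_Hs s T (J1 y0 xi) (J1 x0 eta) < e))"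
proof -
  obtain c1 c2 where c1: "0 < c1" and c2: "0 < c2"
    and lb: "\<And>j. c1 * real (Suc j) powr (- kappa) \<le> lam j" and ub: "\<And>j. lam j \<le> c2 * real (Suc j) powr (- kappa)"
    using lam by blast
  have lam0: "0 \<le> lam j" for j using lb[of j] c1 by (smt (verit) mult_pos_pos powr_gt_zero of_nat_0_less_iff zero_less_Suc)
  have cb: "0 \<le> wt s j * (lam j)\<^sup>2 \<and> wt s j * (lam j)\<^sup>2 \<le> c2\<^sup>2 * wt (-s) j" for j
    using coef_bound[where lam=lam and j=j and s=s and cc=c2 and kappa=kappa, OF lam0[of j] ub[of j]] s by (simp add: less_imp_le)
  obtain K where hb: "\<forall>x. in_Hs s x \<longrightarrow> bounded_op_Hs s K (hessPsi x)" using hess_bound by blast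
  have gH: "\<And>x. in_Hs s x \<Longrightarrow> in_Hs (-s) (gradPsi x)" using grad_is_deriv by blast
  have glip: "norm (U (-s) (gradPsi y) - U (-s) (gradPsi x)) \<le> max K 0 * hs_norm s (y - x)"
    if "in_Hs s x" "in_Hs s y" for x y
    by (rule grad_lip[OF gH hess_is_deriv hb that])
  interpret drift lam s gradPsi "c2\<^sup>2" "max K 0"
    by standard (use gH cb glip in auto)
  define G where "G = Gd lam s gradPsi"
  define LG where "LG = 1 + c2\<^sup>2 * max K 0"
  have LG: "0 < LG" unfolding LG_def by (simp add: add_pos_nonneg)
  define Dc where "Dc v = D_l l (S v)" for v
  have Sc: "continuous_on {0..T} S"
    by (rule DERIV_continuous_on) (use S_ode in auto)
  have Dcc: "continuous_on {0..T} Dc" unfolding Dc_def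
    by (rule continuous_on_compose2[OF D_l_cont[OF l] Sc]) (use S_nonneg in auto)
  have "bounded (Dc ` {0..T})" by (intro compact_imp_bounded compact_continuous_image Dcc compact_Icc)
  then obtain B where B: "\<And>v. v \<in> {0..T} \<Longrightarrow> \<bar>Dc v\<bar> \<le> B" unfolding bounded_iff by fastforce
  define L where "L = (\<bar>B\<bar> + 1) * LG"
  have L: "0 < L" unfolding L_def using LG by simp
  define g where "g v u = Dc v *\<^sub>R G u" for v u
  have gl: "norm (g v x - g v y) \<le> L * norm (x - y)" if v: "v \<in> {0..T}" for v x y
  proof -
    have "norm (g v x - g v y) = \<bar>Dc v\<bar> * norm (G x - G y)" unfolding g_def
      by (simp add: scaleR_diff_right[symmetric])
    also have "\<dots> \<le> (\<bar>B\<bar> + 1) * (LG * norm (x - y))"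
      using B[OF v] Gd_lip[of x y] unfolding G_def LG_def by (intro mult_mono) auto
    finally show ?thesis by (simp add: L_def mult.assoc)
  qed
  have gc: "continuous_on {0..T} (\<lambda>v. g v (u v))" if "continuous_on {0..T} u" for u
    unfolding g_def using continuous_on_compose2[OF Gd_cont that] Dcc unfolding G_def
    by (intro continuous_intros) auto
  have tr: "(\<forall>j. y t j = x0 j + integral {0..t} (\<lambda>v. F_drift lam gradPsi (y v) j * D_l l (S v)) + eta t j)
      \<longleftrightarrow> U s (y t) = U s x0 + integral {0..t} (\<lambda>v. g v (U s (y v))) + U s (eta t)"
    if y: "cont_path_Hs s T y" and x0: "in_Hs s x0" and et: "in_Hs s (eta t)" and t: "t \<in> {0..T}"
    for y x0 eta t
  proof -
    have yH: "\<forall>t\<in>{0..T}. in_Hs s (y t)" and yc: "continuous_on {0..T} (\<lambda>t. U s (y t))"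
      using y unfolding cpath_iff by auto
    have sub: "{0..t} \<subseteq> {0..T}" using t by auto
    have hi: "(\<lambda>v. g v (U s (y v))) integrable_on {0..t}"
      using continuous_on_subset[OF gc[OF yc] sub] by (intro integrable_continuous_interval) simp
    have coord: "l2_rep (integral {0..t} (\<lambda>v. g v (U s (y v)))) j
        = wt s j * integral {0..t} (\<lambda>v. F_drift lam gradPsi (y v) j * D_l l (S v))" for j
    proof -
      have "l2_rep (integral {0..t} (\<lambda>v. g v (U s (y v)))) j
          = integral {0..t} ((\<lambda>u. l2_rep u j) \<circ> (\<lambda>v. g v (U s (y v))))"
        using integral_linear[OF hi bounded_linear_coord[of j]] by simp
      also have "\<dots> = integral {0..t} (\<lambda>v. wt s j * (F_drift lam gradPsi (y v) j * D_l l (S v)))"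
      proof (rule Henstock_Kurzweil_Integration.integral_cong)
        fix v assume "v \<in> {0..t}"
        then have "in_Hs s (y v)" using yH sub by auto
        then show "((\<lambda>u. l2_rep u j) \<circ> (\<lambda>v. g v (U s (y v)))) v = wt s j * (F_drift lam gradPsi (y v) j * D_l l (S v))"
          by (simp add: g_def G_def Gd_rep Ui_U Dc_def)
      qed
      also have "\<dots> = wt s j * integral {0..t} (\<lambda>v. F_drift lam gradPsi (y v) j * D_l l (S v))"
        using integral_cmul[of "{0..t}" "wt s j" "\<lambda>v. F_drift lam gradPsi (y v) j * D_l l (S v)"] by simp
      finally show ?thesis .
    qed
    have "U s (y t) = U s x0 + integral {0..t} (\<lambda>v. g v (U s (y v))) + U s (eta t)
        \<longleftrightarrow> (\<forall>j. l2_rep (U s (y t)) j = l2_rep (U s x0 + integral {0..t} (\<lambda>v. g v (U s (y v))) + U s (eta t)) j)"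
      by (simp add: l2_rep_inject[symmetric] fun_eq_iff)
    also have "\<dots> \<longleftrightarrow> (\<forall>j. wt s j * y t j = wt s j * (x0 j + integral {0..t} (\<lambda>v. F_drift lam gradPsi (y v) j * D_l l (S v)) + eta t j))"
      using yH t x0 et by (simp add: U_rep coord distrib_left)
    also have "\<dots> \<longleftrightarrow> (\<forall>j. y t j = x0 j + integral {0..t} (\<lambda>v. F_drift lam gradPsi (y v) j * D_l l (S v)) + eta t j)"
      by (simp add: less_imp_neq[OF wt_pos, symmetric])
    finally show ?thesis by simp
  qed
  define sol1 where "sol1 x0 eta y \<longleftrightarrow> cont_path_Hs s T y \<and>
      (\<forall>t\<in>{0..T}. \<forall>j. y t j = x0 j + integral {0..t} (\<lambda>v. F_drift lam gradPsi (y v) j * D_l l (S v)) + eta t j)"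
    for x0 eta y
  define lsol where "lsol x0 eta u \<longleftrightarrow> continuous_on {0..T} u \<and>
      (\<forall>t\<in>{0..T}. u t = U s x0 + integral {0..t} (\<lambda>v. g v (u v)) + U s (eta t))" for x0 eta u
  have to_l: "lsol x0 eta (\<lambda>t. U s (y t))"
    if "sol1 x0 eta y" "in_Hs s x0" "cont_path_Hs s T eta" for x0 eta y
    using that tr[of y x0 eta] unfolding sol1_def lsol_def cpath_iff by auto
  have ex: "\<exists>y. sol1 x0 eta y" if x0: "in_Hs s x0" and eta: "cont_path_Hs s T eta" for x0 eta
  proof -
    have ec: "continuous_on {0..T} (\<lambda>t. U s (eta t))" using eta unfolding cpath_iff by auto
    have "\<exists>u. continuous_on {0..T} u \<and> (\<forall>t\<in>{0..T}. u t = U s x0 + integral {0..t} (\<lambda>v. g v (u v)) + U s (eta t))"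
      by (rule ie_exists[where g=g and L=L and T=T and \<eta>="\<lambda>t. U s (eta t)" and xz="U s x0", OF L _ gl gc ec])
        (use T in auto)
    then obtain u where uc: "continuous_on {0..T} u"
      and ue: "\<forall>t\<in>{0..T}. u t = U s x0 + integral {0..t} (\<lambda>v. g v (u v)) + U s (eta t)" by blast
    define y where "y t = Ui s (u t)" for t
    have Uy: "U s (y t) = u t" for t by (simp add: y_def)
    have yp: "cont_path_Hs s T y" unfolding cpath_iff using uc by (simp add: y_def in_Hs_Ui)
    have "sol1 x0 eta y" unfolding sol1_def
      using yp tr[OF yp x0] ue eta unfolding cpath_iff by (simp add: Uy)
    then show ?thesis by blast
  qed
  define J1 where "J1 x0 eta = (SOME y. sol1 x0 eta y)" for x0 eta
  have J1sol: "sol1 x0 eta (J1 x0 eta)" if "in_Hs s x0" "cont_path_Hs s T eta" for x0 eta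
    unfolding J1_def using ex[OF that] by (rule someI_ex)
  have stab: "norm (ua t - ub t) \<le> 2 * exp (2 * L * T) * \<delta>"
    if "lsol xa ea ua" "lsol xb eb ub"
      "\<And>t. t \<in> {0..T} \<Longrightarrow> norm (U s xa - U s xb + (U s (ea t) - U s (eb t))) \<le> \<delta>" "t \<in> {0..T}"
    for xa xb ea eb ua ub \<delta> t
    using ie_stability[where g=g and L=L and T=T and x=ua and y=ub and xz="U s xa" and yz="U s xb"
        and \<eta>="\<lambda>t. U s (ea t)" and \<xi>="\<lambda>t. U s (eb t)" and \<delta>=\<delta> and t=t]
      that L gl gc unfolding lsol_def by auto
  have uniq: "y t = J1 x0 eta t"
    if x0: "in_Hs s x0" and eta: "cont_path_Hs s T eta" and sy: "sol1 x0 eta y" and t: "t \<in> {0..T}" for x0 eta y t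
  proof -
    have "norm (U s (y t) - U s (J1 x0 eta t)) \<le> 2 * exp (2 * L * T) * 0"
      by (rule stab[OF to_l[OF sy x0 eta] to_l[OF J1sol[OF x0 eta] x0 eta] _ t]) simp
    then have "U s (y t) = U s (J1 x0 eta t)" by simp
    moreover have "in_Hs s (y t)" "in_Hs s (J1 x0 eta t)"
      using sy J1sol[OF x0 eta] t unfolding sol1_def cpath_iff by auto
    ultimately show ?thesis by (metis Ui_U)
  qed
  have cont: "\<exists>d>0. \<forall>y0 xi. in_Hs s y0 \<and> cont_path_Hs s T xi \<and>
              hs_norm s (y0 - x0) + sup_dist_Hs s T xi eta < d \<longrightarrow>
              sup_dist_Hs s T (J1 y0 xi) (J1 x0 eta) < e"
    if x0: "in_Hs s x0" and eta: "cont_path_Hs s T eta" and e: "e > 0" for x0 eta e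
  proof -
    define C where "C = 2 * exp (2 * L * T)"
    have C: "0 < C" unfolding C_def by simp
    show ?thesis
    proof (intro exI[of _ "e / C"] conjI allI impI)
      show "0 < e / C" using e C by simp
      fix y0 xi assume H: "in_Hs s y0 \<and> cont_path_Hs s T xi \<and> hs_norm s (y0 - x0) + sup_dist_Hs s T xi eta < e / C"
      then have y0: "in_Hs s y0" and xi: "cont_path_Hs s T xi"
        and small: "hs_norm s (y0 - x0) + sup_dist_Hs s T xi eta < e / C" by auto
      define dd where "dd = hs_norm s (y0 - x0) + sup_dist_Hs s T xi eta"
      have xiH: "\<forall>t\<in>{0..T}. in_Hs s (xi t)" and etH: "\<forall>t\<in>{0..T}. in_Hs s (eta t)"
        using xi eta unfolding cpath_iff by auto
      have dl: "norm (U s y0 - U s x0 + (U s (xi t) - U s (eta t))) \<le> dd" if t: "t \<in> {0..T}" for t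
      proof -
        have "norm (U s y0 - U s x0 + (U s (xi t) - U s (eta t))) \<le> norm (U s y0 - U s x0) + norm (U s (xi t) - U s (eta t))"
          by (rule norm_triangle_ineq)
        also have "\<dots> = hs_norm s (y0 - x0) + hs_norm s (xi t - eta t)"
          using y0 x0 xiH etH t by (simp add: hs_norm_diff)
        also have "\<dots> \<le> hs_norm s (y0 - x0) + sup_dist_Hs s T xi eta"
          using sup_dist_Hs_ge[OF xi eta t] by (rule add_left_mono)
        finally show ?thesis unfolding dd_def .
      qed
      have s1: "sol1 y0 xi (J1 y0 xi)" and s2: "sol1 x0 eta (J1 x0 eta)" using J1sol y0 xi x0 eta by auto
      have "sup_dist_Hs s T (J1 y0 xi) (J1 x0 eta) \<le> C * dd"
      proof (rule sup_dist_Hs_le)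
        show "0 \<le> T" using T by simp
        fix t assume t: "t \<in> {0..T}"
        have "norm (U s (J1 y0 xi t) - U s (J1 x0 eta t)) \<le> 2 * exp (2 * L * T) * dd"
          by (rule stab[OF to_l[OF s1 y0 xi] to_l[OF s2 x0 eta] dl t])
        moreover have "in_Hs s (J1 y0 xi t)" "in_Hs s (J1 x0 eta t)"
          using s1 s2 t unfolding sol1_def cpath_iff by auto
        ultimately show "hs_norm s (J1 y0 xi t - J1 x0 eta t) \<le> C * dd" by (simp add: hs_norm_diff C_def)
      qed
      also have "C * dd < C * (e / C)" using mult_strict_left_mono[OF small C] unfolding dd_def .
      also have "\<dots> = e" using C by simp
      finally show "sup_dist_Hs s T (J1 y0 xi) (J1 x0 eta) < e" .
    qed
  qed
  show ?thesis
    apply (rule exI[of _ J1])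
    using J1sol uniq cont unfolding sol1_def by blast
qed



theorem theorem4p6:
  fixes lam :: "nat \<Rightarrow> real" and kappa s :: real
    and Psi :: "hvec \<Rightarrow> real" and gradPsi :: "hvec \<Rightarrow> hvec" and hessPsi :: "hvec \<Rightarrow> hvec \<Rightarrow> hvec"
    and l T a :: real and S :: "real \<Rightarrow> real" and tA :: "real \<Rightarrow> real"
  assumes kappa: "kappa > 1/2"
    and lam: "\<exists>c1 c2. 0 < c1 \<and> 0 < c2 \<and> (\<forall>j. c1 * real (Suc j) powr (- kappa) \<le> lam j \<and>
                 lam j \<le> c2 * real (Suc j) powr (- kappa))"
    and s: "0 \<le> s" "s < kappa - 1/2"
    and Psi_bounds: "\<exists>K. \<forall>x. in_Hs s x \<longrightarrow> 0 \<le> Psi x \<and> Psi x \<le> K * (1 + (hs_norm s x)\<^sup>2)"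
    and grad_is_deriv: "\<forall>x. in_Hs s x \<longrightarrow> in_Hs (-s) (gradPsi x) \<and>
          (\<forall>e>0. \<exists>d>0. \<forall>h. in_Hs s h \<and> hs_norm s h < d \<longrightarrow>
             \<bar>Psi (\<lambda>j. x j + h j) - Psi x - pairing (gradPsi x) h\<bar> \<le> e * hs_norm s h)"
    and hess_is_deriv: "\<forall>x. in_Hs s x \<longrightarrow>
          (\<forall>e>0. \<exists>d>0. \<forall>h. in_Hs s h \<and> hs_norm s h < d \<longrightarrow>
             hs_norm (-s) (gradPsi (\<lambda>j. x j + h j) - gradPsi x - hessPsi x h) \<le> e * hs_norm s h)"
    and grad_bound: "\<exists>K. \<forall>x. in_Hs s x \<longrightarrow> hs_norm (-s) (gradPsi x) \<le> K * (1 + hs_norm s x)"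
    and hess_bound: "\<exists>K. \<forall>x. in_Hs s x \<longrightarrow> bounded_op_Hs s K (hessPsi x)"
    and l: "l > 0" and T: "T > 0" and a: "a \<ge> 0"
    and S_nonneg: "\<forall>t\<in>{0..T}. S t \<ge> 0"
    and S_ode: "\<forall>t\<in>{0..T}. (S has_real_derivative A_l l (S t)) (at t within {0..T})"
    and tA_ext: "\<forall>x\<ge>0. tA x = A_l l x"
    and tA_one: "\<forall>x\<le>-1/2. tA x = 1"
    and tA_smooth: "\<forall>x\<in>{-1/2<..<0}. \<forall>n. ((deriv ^^ n) tA) differentiable (at x)"
    and tA_pos: "\<forall>x<1. tA x > 0"
    and tA_lip: "\<exists>K. \<forall>x y. \<bar>tA x - tA y\<bar> \<le> K * (1 + \<bar>x\<bar>) * \<bar>x - y\<bar>"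
  shows
    "(\<exists>J1 :: hvec \<Rightarrow> (real \<Rightarrow> hvec) \<Rightarrow> (real \<Rightarrow> hvec).
        (\<forall>x0 eta. in_Hs s x0 \<and> cont_path_Hs s T eta \<longrightarrow>
           cont_path_Hs s T (J1 x0 eta) \<and>
           (\<forall>t\<in>{0..T}. \<forall>j. J1 x0 eta t j = x0 j
               + integral {0..t} (\<lambda>v. F_drift lam gradPsi (J1 x0 eta v) j * D_l l (S v)) + eta t j) \<and>
           (\<forall>y. cont_path_Hs s T y \<and>
              (\<forall>t\<in>{0..T}. \<forall>j. y t j = x0 j
                 + integral {0..t} (\<lambda>v. F_drift lam gradPsi (y v) j * D_l l (S v)) + eta t j)
              \<longrightarrow> (\<forall>t\<in>{0..T}. y t = J1 x0 eta t))) \<and>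
        (\<forall>x0 eta. in_Hs s x0 \<and> cont_path_Hs s T eta \<longrightarrow>
           (\<forall>e>0. \<exists>d>0. \<forall>y0 xi. in_Hs s y0 \<and> cont_path_Hs s T xi \<and>
              hs_norm s (y0 - x0) + sup_dist_Hs s T xi eta < d \<longrightarrow>
              sup_dist_Hs s T (J1 y0 xi) (J1 x0 eta) < e))) \<and>
     (\<exists>J2 :: real \<Rightarrow> (real \<Rightarrow> real) \<Rightarrow> (real \<Rightarrow> real).
        (\<forall>S0 w. S0 \<ge> 0 \<and> continuous_on {0..T} w \<longrightarrow>
           continuous_on {0..T} (J2 S0 w) \<and>
           (\<forall>t\<in>{0..T}. J2 S0 w t = S0 + integral {0..t} (\<lambda>v. tA (J2 S0 w v)) + a * w t) \<and>
           (\<forall>y. continuous_on {0..T} y \<and>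
              (\<forall>t\<in>{0..T}. y t = S0 + integral {0..t} (\<lambda>v. tA (y v)) + a * w t)
              \<longrightarrow> (\<forall>t\<in>{0..T}. y t = J2 S0 w t))) \<and>
        (\<forall>S0 w. S0 \<ge> 0 \<and> continuous_on {0..T} w \<longrightarrow>
           (\<forall>e>0. \<exists>d>0. \<forall>R0 u. R0 \<ge> 0 \<and> continuous_on {0..T} u \<and>
              \<bar>R0 - S0\<bar> + sup_dist_R T u w < d \<longrightarrow>
              sup_dist_R T (J2 R0 u) (J2 S0 w) < e)))"
  proof (rule conjI)
  show "\<exists>J1 :: hvec \<Rightarrow> (real \<Rightarrow> hvec) \<Rightarrow> (real \<Rightarrow> hvec).
        (\<forall>x0 eta. in_Hs s x0 \<and> cont_path_Hs s T eta \<longrightarrow>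
           cont_path_Hs s T (J1 x0 eta) \<and>
           (\<forall>t\<in>{0..T}. \<forall>j. J1 x0 eta t j = x0 j
               + integral {0..t} (\<lambda>v. F_drift lam gradPsi (J1 x0 eta v) j * D_l l (S v)) + eta t j) \<and>
           (\<forall>y. cont_path_Hs s T y \<and>
              (\<forall>t\<in>{0..T}. \<forall>j. y t j = x0 j
                 + integral {0..t} (\<lambda>v. F_drift lam gradPsi (y v) j * D_l l (S v)) + eta t j)
              \<longrightarrow> (\<forall>t\<in>{0..T}. y t = J1 x0 eta t))) \<and>
        (\<forall>x0 eta. in_Hs s x0 \<and> cont_path_Hs s T eta \<longrightarrow>
           (\<forall>e>0. \<exists>d>0. \<forall>y0 xi. in_Hs s y0 \<and> cont_path_Hs s T xi \<and>
              hs_norm s (y0 - x0) + sup_dist_Hs s T xi eta < d \<longrightarrow>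
              sup_dist_Hs s T (J1 y0 xi) (J1 x0 eta) < e))"
    by (rule J1_main[OF lam s grad_is_deriv hess_is_deriv hess_bound l T S_nonneg S_ode])
next
  show "\<exists>J2 :: real \<Rightarrow> (real \<Rightarrow> real) \<Rightarrow> (real \<Rightarrow> real).
        (\<forall>S0 w. S0 \<ge> 0 \<and> continuous_on {0..T} w \<longrightarrow>
           continuous_on {0..T} (J2 S0 w) \<and>
           (\<forall>t\<in>{0..T}. J2 S0 w t = S0 + integral {0..t} (\<lambda>v. tA (J2 S0 w v)) + a * w t) \<and>
           (\<forall>y. continuous_on {0..T} y \<and>
              (\<forall>t\<in>{0..T}. y t = S0 + integral {0..t} (\<lambda>v. tA (y v)) + a * w t)
              \<longrightarrow> (\<forall>t\<in>{0..T}. y t = J2 S0 w t))) \<and>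
        (\<forall>S0 w. S0 \<ge> 0 \<and> continuous_on {0..T} w \<longrightarrow>
           (\<forall>e>0. \<exists>d>0. \<forall>R0 u. R0 \<ge> 0 \<and> continuous_on {0..T} u \<and>
              \<bar>R0 - S0\<bar> + sup_dist_R T u w < d \<longrightarrow>
              sup_dist_R T (J2 R0 u) (J2 S0 w) < e))"
    by (rule J2_main[OF T a tA_ext tA_one tA_pos tA_lip])
qed

end
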